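(* Let $n,m$ be positive integers, $u\in\mathbb{C}$, and $a,b,c\in\mathbb{Z}$ with $\nu:=a-b\in\{-n,-n+2,\dots,n\}$ and $\mu:=b-c\in\{-m,-m+2,\dots,m\}$. Put $m_+=\tfrac12(m-\mu)$, $m_-=\tfrac12(m+\mu)$, $x=a+w$. Then $$L\,\psi^{(n)}(z|0)^{a}_{b}=\sum_{b'}W^{(n,m)}\left(\begin{smallmatrix} a& b\\ b'& c\end{smallmatrix}\middle|u\right)\psi^{(n)}(z|0)^{b'}_{c},$$ the sum over $b'\in\mathbb{Z}$ with $\mu':=b'-a\in\{-m,-m+2,\dots,m\}$, where $$W^{(n,m)}\left(\begin{smallmatrix} a& b\\ b'& c\end{smallmatrix}\middle|u\right)=\sum_{\Sigma}\frac{(x+\mu')\binom{m_-}{\varkappa_+}\binom{m_+}{\rho_+}(\theta_1)^-_{\varkappa_+}(\theta_2)^+_{\varkappa_+}(\theta_3)^-_{\varkappa_-}(\theta_4)^-_{\varkappa_-}(\theta_5)^-_{\rho_+}(\theta_6)^+_{\rho_+}(\theta_7)^-_{\rho_-}(\theta_8)^-_{\rho_-}}{x\,(x+1)^+_{\varkappa_+}(x-1)^-_{\varkappa_-}(x+\Sigma+1)^+_{\rho_+}(x+\Sigma-1)^-_{\rho_-}},$$ the sum running over $\Sigma\in\{-m_-,-m_-+2,\dots,m_-\}$ with $|\mu'-\Sigma|\le m_+$, and where $\varkappa_\pm=\tfrac12(m_-\pm\Sigma)$, $\rho_\pm=\tfrac12(m_+\pm(\mu'-\Sigma))$, $\theta_1=\tfrac12(n-\nu)$,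 $\theta_2=-u+c+m_--\tfrac12(n-\nu)+w$, $\theta_3=u-m_++\tfrac12(n+\nu)$, $\theta_4=c+\mu+\tfrac12(n+\nu)+w$, $\theta_5=u+\tfrac12(n-\nu-\Sigma-m_-)$, $\theta_6=c+\mu-\tfrac12(n-\nu-\Sigma+m_-)+w$, $\theta_7=\tfrac12(n+\nu+\Sigma+m_-)$, $\theta_8=u+c+\mu+\tfrac12(n+\nu+\Sigma-m_-)+w$. Moreover, the coefficients in this expansion are uniquely determined (the polynomials $\psi^{(n)}(z|0)^{b'}_c$, $b'\in\{c-n,c-n+2,\dots,c+n\}$, being linearly independent).
   Context: Fix $\alpha\in\mathbb{C}\setminus\{0\}$, $s,t\in\mathbb{C}$, $w=\tfrac12(s+t)\notin\mathbb{Z}$. $[\Delta_\pm f](z)=\tfrac12(f(z+\alpha)\pm f(z-\alpha))$; $z$ acts by multiplication on $\mathbb{C}[z]$. Polynomials: for a positive integer $n$, integers $a,b$, with $n_+=\tfrac12(n+b-a)$, $n_-=\tfrac12(n-b+a)$, if $n_\pm$ are nonnegative integers then $\psi^{(n)}(z|u)^a_b=(-1)^n\prod_{p=1}^{n_+}[z-\alpha(u+n-a-2p+1-t)]\prod_{q=1}^{n_-}[z-\alpha(u+n+a-2q+1+s)]$, otherwise $\psi^{(n)}(z|u)^a_b=0$. Ordered product: $\prod_{l=N_1}^{\overset{N_2}{\longleftarrow}}A_l=A_{N_2}\cdots A_{N_1}$ (empty $=$ identity). For $m_\pm=\tfrac12(m\pm(c-b))$ the operator $L=L_m(u,b,c)$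 on $\mathbb{C}[z]$ is $L=(-\alpha)^{-m}\prod_{l=0}^{\overset{m_+-1}{\longleftarrow}}\big\{[\alpha(-u+\tfrac12(m-b-c)-t)-z]\Delta_--\alpha(u-l)\Delta_+\big\}\prod_{l'=0}^{\overset{m_--1}{\longleftarrow}}\big\{[\alpha(-u+\tfrac12(m+b+c)+s)-z]\Delta_--\alpha(u-m_+-l')\Delta_+\big\}$. Rising/falling products: $(y)^\pm_k=\prod_{j=0}^{k-1}(y\pm j)$ (empty $=1$). *)

theory Defs
  imports "HOL-Computational_Algebra.Polynomial" Complex_Main
begin

definition Dplus :: "complex \<Rightarrow> complex poly \<Rightarrow> complex poly" where
  "Dplus \<alpha> f = smult (1/2) (pcompose f [:\<alpha>, 1:] + pcompose f [:-\<alpha>, 1:])"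

definition Dminus :: "complex \<Rightarrow> complex poly \<Rightarrow> complex poly" where
  "Dminus \<alpha> f = smult (1/2) (pcompose f [:\<alpha>, 1:] - pcompose f [:-\<alpha>, 1:])"

definition rising :: "complex \<Rightarrow> nat \<Rightarrow> complex" where
  "rising y k = (\<Prod>j<k. (y + of_nat j))"

definition falling :: "complex \<Rightarrow> nat \<Rightarrow> complex" where
  "falling y k = (\<Prod>j<k. (y - of_nat j))"

definition psi :: "complex \<Rightarrow> complex \<Rightarrow> complex \<Rightarrow> nat \<Rightarrow> complex \<Rightarrow> int \<Rightarrow> int \<Rightarrow> complex poly" where
  "psi \<alpha> s t n u a b =
     (if (int n + b - a) mod 2 = 0 \<and> 0 \<le> int n + b - a \<and> 0 \<le> int n - b + a then
        smult ((-1) ^ n)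
          ((\<Prod>p\<in>{1..nat ((int n + b - a) div 2)}.
              [: - (\<alpha> * (u + of_nat n - of_int a - 2 * of_nat p + 1 - t)), 1 :]) *
           (\<Prod>q\<in>{1..nat ((int n - b + a) div 2)}.
              [: - (\<alpha> * (u + of_nat n + of_int a - 2 * of_nat q + 1 + s)), 1 :]))
      else 0)"

fun opprod :: "(nat \<Rightarrow> 'a \<Rightarrow> 'a) \<Rightarrow> nat \<Rightarrow> 'a \<Rightarrow> 'a" where
  "opprod A 0 f = f"
| "opprod A (Suc k) f = A k (opprod A k f)"

definition Lop :: "complex \<Rightarrow> complex \<Rightarrow> complex \<Rightarrow> nat \<Rightarrow> complex \<Rightarrow> int \<Rightarrow> int
                   \<Rightarrow> complex poly \<Rightarrow> complex poly" where
  "Lop \<alpha> s t m u b c f =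
    (let mp = nat ((int m + (c - b)) div 2);
         mm = nat ((int m - (c - b)) div 2);
         A = (\<lambda>l g. [: \<alpha> * (- u + of_int (int m - b - c) / 2 - t), -1 :] * Dminus \<alpha> g
                     - smult (\<alpha> * (u - of_nat l)) (Dplus \<alpha> g));
         B = (\<lambda>l' g. [: \<alpha> * (- u + of_int (int m + b + c) / 2 + s), -1 :] * Dminus \<alpha> g
                     - smult (\<alpha> * (u - of_nat mp - of_nat l')) (Dplus \<alpha> g))
     in smult (inverse ((-\<alpha>) ^ m)) (opprod A mp (opprod B mm f)))"

definition Wcoef :: "complex \<Rightarrow> complex \<Rightarrow> nat \<Rightarrow> nat \<Rightarrow> int \<Rightarrow> int \<Rightarrow> int \<Rightarrow> int \<Rightarrow> complex \<Rightarrow> complex" where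
  "Wcoef s t n m a b b' c u =
    (let w = (s + t) / 2;
         \<nu> = a - b; \<mu> = b - c; \<mu>' = b' - a;
         mp = nat ((int m - \<mu>) div 2);
         mm = nat ((int m + \<mu>) div 2);
         x = of_int a + w
     in (\<Sum>\<Sigma>\<in>{\<Sigma>::int. - int mm \<le> \<Sigma> \<and> \<Sigma> \<le> int mm \<and> (\<Sigma> + int mm) mod 2 = 0
                       \<and> \<bar>\<mu>' - \<Sigma>\<bar> \<le> int mp}.
          (let kp = nat ((int mm + \<Sigma>) div 2);
               km = nat ((int mm - \<Sigma>) div 2);
               rp = nat ((int mp + (\<mu>' - \<Sigma>)) div 2);
               rm = nat ((int mp - (\<mu>' - \<Sigma>)) div 2);
               \<theta>1 = of_int (int n - \<nu>) / 2;
               \<theta>2 = - u + of_int c + of_nat mm - of_int (int n - \<nu>) / 2 + w;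
               \<theta>3 = u - of_nat mp + of_int (int n + \<nu>) / 2;
               \<theta>4 = of_int c + of_int \<mu> + of_int (int n + \<nu>) / 2 + w;
               \<theta>5 = u + of_int (int n - \<nu> - \<Sigma> - int mm) / 2;
               \<theta>6 = of_int c + of_int \<mu> - of_int (int n - \<nu> - \<Sigma> + int mm) / 2 + w;
               \<theta>7 = of_int (int n + \<nu> + \<Sigma> + int mm) / 2;
               \<theta>8 = u + of_int c + of_int \<mu> + of_int (int n + \<nu> + \<Sigma> - int mm) / 2 + w
           in ((x + of_int \<mu>') * of_nat (mm choose kp) * of_nat (mp choose rp)
                * falling \<theta>1 kp * rising \<theta>2 kp * falling \<theta>3 km * falling \<theta>4 km
                * falling \<theta>5 rp * rising \<theta>6 rp * falling \<theta>7 rm * falling \<theta>8 rm)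
              / (x * rising (x + 1) kp * falling (x - 1) km
                 * rising (x + of_int \<Sigma> + 1) rp * falling (x + of_int \<Sigma> - 1) rm))))"

end

theory Submission
  imports Defs
begin

definition Pp :: "complex \<Rightarrow> complex \<Rightarrow> nat \<Rightarrow> complex poly" where
  "Pp \<alpha> c N = (\<Prod>i<N. [:-(\<alpha>*(c + 2*of_nat i)), 1:])"

lemma Pp_0[simp]: "Pp \<alpha> c 0 = 1" by (simp add: Pp_def)

lemma Pp_Suc_left: "Pp \<alpha> c (Suc N) = [:-(\<alpha>*c),1:] * Pp \<alpha> (c+2) N"
  unfolding Pp_def prod.lessThan_Suc_shift by (simp add: algebra_simps)

lemma Pp_Suc_right: "Pp \<alpha> c (Suc N) = Pp \<alpha> c N * [:-(\<alpha>*(c + 2*of_nat N)),1:]"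
  unfolding Pp_def by simp

lemma lin_comp: "[:a,1:] \<circ>\<^sub>p [:d,1:] = [:a+d,1::complex:]"
  by (simp add: pcompose_pCons)

lemma Pp_shift_plus: "Pp \<alpha> c N \<circ>\<^sub>p [:\<alpha>,1:] = Pp \<alpha> (c-1) N"
  unfolding Pp_def pcompose_prod by (intro prod.cong refl) (simp add: lin_comp algebra_simps)

lemma Pp_shift_minus: "Pp \<alpha> c N \<circ>\<^sub>p [:-\<alpha>,1:] = Pp \<alpha> (c+1) N"
  unfolding Pp_def pcompose_prod by (intro prod.cong refl) (simp add: lin_comp algebra_simps)

lemma Pp_nonzero: "Pp \<alpha> c N \<noteq> 0"
  unfolding Pp_def by (simp add: prod_zero_iff)

lemma core_quad:
  fixes \<beta> \<gamma> p q r1 r2 :: complex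
  assumes "\<beta> + \<gamma> = q" "r1 \<noteq> r2"
  shows "[:\<beta>,-1:] * smult (1/2) ([:-p,1:]*[:-q,1:] - [:-r1,1:]*[:-r2,1:])
          - smult \<gamma> (smult (1/2) ([:-p,1:]*[:-q,1:] + [:-r1,1:]*[:-r2,1:]))
       = smult ((r1-p)*(\<beta>-\<gamma>-r1)/(2*(r1-r2))) ([:-q,1:]*[:-r2,1:])
         + smult ((\<beta>-\<gamma>-r2)*(r2-p)/(2*(r2-r1))) ([:-q,1:]*[:-r1,1:])"
proof -
  obtain d where d: "r1 = r2 + d" "d \<noteq> 0" using assms(2) by (metis add_diff_cancel_left' diff_eq_eq eq_iff_diff_eq_0)
  have b: "\<beta> = q - \<gamma>" using assms(1) by (simp add: algebra_simps)
  show ?thesis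
    apply (rule poly_eq_poly_eq_iff[THEN iffD1])
    apply (rule ext)
    apply (simp add: b d field_simps)
    done
qed

definition Op :: "complex \<Rightarrow> complex \<Rightarrow> complex \<Rightarrow> complex poly \<Rightarrow> complex poly" where
  "Op \<alpha> \<beta> \<gamma> g = [:\<beta>,-1:] * Dminus \<alpha> g - smult \<gamma> (Dplus \<alpha> g)"

lemma sm: "smult c p = [:c:] * p" by simp

lemma ring_aux1: fixes Z h k F G E :: "'a::comm_ring"
  shows "(Z * (h*(F - G)) - k*(h*(F+G))) * E = Z*(h*(F*E - G*E)) - k*(h*(F*E + G*E))"
  by (simp add: algebra_simps)
lemma ring_aux2: fixes Z h k A B H E :: "'a::comm_ring"
  shows "Z*(h*(A*H - H*E)) - k*(h*(A*H + H*E)) = H * (Z*(h*(A - E)) - k*(h*(A+E)))"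
  by (simp add: algebra_simps)

lemma Pp_ext: "Pp \<alpha> c N * [:-(\<alpha>*(c+2*of_nat N)),1:] = [:-(\<alpha>*c),1:] * Pp \<alpha> (c+2) N"
  by (metis Pp_Suc_left Pp_Suc_right)

lemma stepB:
  fixes \<alpha> \<beta> \<gamma> c1 c2 :: complex and Np Nm :: nat
  assumes "\<beta>+\<gamma> = \<alpha>*(c2-1)" "\<alpha>*(c1 - 1 + 2*of_nat Np) \<noteq> \<alpha>*(c2-1+2*of_nat Nm)"
  shows "Op \<alpha> \<beta> \<gamma> (Pp \<alpha> c1 Np * Pp \<alpha> c2 Nm) =
     smult ((\<alpha>*(c1 - 1 + 2*of_nat Np) - \<alpha>*(c1-1))*(\<beta>-\<gamma>-\<alpha>*(c1 - 1 + 2*of_nat Np))/(2*(\<alpha>*(c1 - 1 + 2*of_nat Np)-\<alpha>*(c2-1+2*of_nat Nm))))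
        (Pp \<alpha> (c1+1) (Np-1) * Pp \<alpha> (c2-1) (Suc Nm))
   + smult ((\<beta>-\<gamma>-\<alpha>*(c2-1+2*of_nat Nm))*(\<alpha>*(c2-1+2*of_nat Nm)-\<alpha>*(c1-1))/(2*(\<alpha>*(c2-1+2*of_nat Nm)-\<alpha>*(c1 - 1 + 2*of_nat Np))))
        (Pp \<alpha> (c1+1) Np * Pp \<alpha> (c2-1) Nm)"
    (is "_ = smult ?C1 ?g1 + smult ?C2 ?g2")
proof -
  define r1 where "r1 = \<alpha>*(c1 - 1 + 2*of_nat Np)"
  define r2 where "r2 = \<alpha>*(c2-1+2*of_nat Nm)"
  define E1 where "E1 = [:-r1,1:]"
  define E2 where "E2 = [:-r2,1:]"
  define L1 where "L1 = [:-(\<alpha>*(c1-1)),1::complex:]"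
  define L2 where "L2 = [:-(\<alpha>*(c2-1)),1::complex:]"
  define H where "H = Pp \<alpha> (c1+1) Np * Pp \<alpha> (c2+1) Nm"
  define fp where "fp = Pp \<alpha> (c1-1) Np * Pp \<alpha> (c2-1) Nm"
  have F1: "Pp \<alpha> (c1-1) Np * E1 = L1 * Pp \<alpha> (c1+1) Np"
    using Pp_ext[of \<alpha> "c1-1" Np] by (simp add: E1_def L1_def r1_def algebra_simps)
  have F2: "Pp \<alpha> (c2-1) Nm * E2 = L2 * Pp \<alpha> (c2+1) Nm"
    using Pp_ext[of \<alpha> "c2-1" Nm] by (simp add: E2_def L2_def r2_def algebra_simps)
  have F4: "Pp \<alpha> (c2-1) (Suc Nm) = L2 * Pp \<alpha> (c2+1) Nm"
    using Pp_Suc_left[of \<alpha> "c2-1" Nm] by (simp add: L2_def algebra_simps)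
  have fpE: "fp * (E1*E2) = L1*L2*H"
  proof -
    have "fp * (E1*E2) = (Pp \<alpha> (c1-1) Np * E1) * (Pp \<alpha> (c2-1) Nm * E2)" by (simp add: fp_def ac_simps)
    also have "\<dots> = L1*L2*H" unfolding F1 F2 by (simp add: H_def ac_simps)
    finally show ?thesis .
  qed
  have Dm: "Dminus \<alpha> (Pp \<alpha> c1 Np * Pp \<alpha> c2 Nm) = smult (1/2) (fp - H)"
    by (simp add: Dminus_def pcompose_mult Pp_shift_plus Pp_shift_minus fp_def H_def)
  have Dp: "Dplus \<alpha> (Pp \<alpha> c1 Np * Pp \<alpha> c2 Nm) = smult (1/2) (fp + H)"
    by (simp add: Dplus_def pcompose_mult Pp_shift_plus Pp_shift_minus fp_def H_def)
  have bg: "\<beta>+\<gamma> = \<alpha>*(c2-1)" using assms by simp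
  have r12: "r1 \<noteq> r2" using assms(2) by (simp add: r1_def r2_def)
  have core: "[:\<beta>,-1:] * smult (1/2) (L1*L2 - E1*E2) - smult \<gamma> (smult (1/2) (L1*L2 + E1*E2))
       = smult ?C1 (L2*E2) + smult ?C2 (L2*E1)"
    using core_quad[OF bg r12, of "\<alpha>*(c1-1)"] by (simp add: L1_def L2_def E1_def E2_def r1_def r2_def)
  have lhsE: "Op \<alpha> \<beta> \<gamma> (Pp \<alpha> c1 Np * Pp \<alpha> c2 Nm) * (E1*E2) = H * (smult ?C1 (L2*E2) + smult ?C2 (L2*E1))"
  proof -
    have "Op \<alpha> \<beta> \<gamma> (Pp \<alpha> c1 Np * Pp \<alpha> c2 Nm) * (E1*E2)
       = [:\<beta>,-1:] * smult (1/2) (fp*(E1*E2) - H*(E1*E2)) - smult \<gamma> (smult (1/2) (fp*(E1*E2) + H*(E1*E2)))"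
      unfolding Op_def Dm Dp sm using ring_aux1 by blast
    also have "\<dots> = H * ([:\<beta>,-1:] * smult (1/2) (L1*L2 - E1*E2) - smult \<gamma> (smult (1/2) (L1*L2 + E1*E2)))"
      unfolding fpE sm by (rule ring_aux2)
    finally show ?thesis unfolding core .
  qed
  have rhs2: "?g2 * (E1*E2) = H * (L2*E1)"
  proof -
    have "?g2 * (E1*E2) = Pp \<alpha> (c1+1) Np * (Pp \<alpha> (c2-1) Nm * E2) * E1" by (simp add: ac_simps)
    also have "\<dots> = H * (L2*E1)" unfolding F2 by (simp add: H_def ac_simps)
    finally show ?thesis .
  qed
  have rhs1: "smult ?C1 ?g1 * (E1*E2) = smult ?C1 (H * (L2*E2))"
  proof (cases Np)
    case 0
    then show ?thesis by simp
  next
    case (Suc N)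
    have "Pp \<alpha> (c1+1) (Np-1) * E1 = Pp \<alpha> (c1+1) Np"
      using Pp_Suc_right[of \<alpha> "c1+1" N] Suc by (simp add: E1_def r1_def algebra_simps)
    then have "?g1 * (E1*E2) = H * (L2*E2)"
    proof -
      assume h: "Pp \<alpha> (c1+1) (Np-1) * E1 = Pp \<alpha> (c1+1) Np"
      have "?g1 * (E1*E2) = (Pp \<alpha> (c1+1) (Np-1) * E1) * Pp \<alpha> (c2-1) (Suc Nm) * E2" by (simp add: ac_simps)
      also have "\<dots> = H * (L2*E2)" unfolding h F4 by (simp add: H_def ac_simps)
      finally show ?thesis .
    qed
    then show ?thesis by (simp only: mult_smult_left)
  qed
  have "(smult ?C1 ?g1 + smult ?C2 ?g2) * (E1*E2) = H * (smult ?C1 (L2*E2) + smult ?C2 (L2*E1))"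
  proof -
    have "(smult ?C1 ?g1 + smult ?C2 ?g2) * (E1*E2) = smult ?C1 ?g1 * (E1*E2) + smult ?C2 (?g2 * (E1*E2))"
      by (simp only: distrib_right mult_smult_left)
    also have "\<dots> = smult ?C1 (H * (L2*E2)) + smult ?C2 (H * (L2*E1))" by (simp only: rhs1 rhs2)
    also have "\<dots> = H * (smult ?C1 (L2*E2) + smult ?C2 (L2*E1))" by (simp only: mult_smult_right distrib_left)
    finally show ?thesis .
  qed
  moreover have "E1*E2 \<noteq> 0" by (simp add: E1_def E2_def)
  ultimately show ?thesis using lhsE by (metis mult_cancel_right)
qed

lemma stepA:
  fixes \<alpha> \<beta> \<gamma> c1 c2 :: complex and Np Nm :: nat
  assumes "\<beta>+\<gamma> = \<alpha>*(c1-1)" "\<alpha>*(c1 - 1 + 2*of_nat Np) \<noteq> \<alpha>*(c2-1+2*of_nat Nm)"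
  shows "Op \<alpha> \<beta> \<gamma> (Pp \<alpha> c1 Np * Pp \<alpha> c2 Nm) =
     smult ((\<alpha>*(c1 - 1 + 2*of_nat Np) - \<alpha>*(c2-1))*(\<beta>-\<gamma>-\<alpha>*(c1 - 1 + 2*of_nat Np))/(2*(\<alpha>*(c1 - 1 + 2*of_nat Np)-\<alpha>*(c2-1+2*of_nat Nm))))
        (Pp \<alpha> (c1-1) Np * Pp \<alpha> (c2+1) Nm)
   + smult ((\<beta>-\<gamma>-\<alpha>*(c2-1+2*of_nat Nm))*(\<alpha>*(c2-1+2*of_nat Nm)-\<alpha>*(c2-1))/(2*(\<alpha>*(c2-1+2*of_nat Nm)-\<alpha>*(c1 - 1 + 2*of_nat Np))))
        (Pp \<alpha> (c1-1) (Suc Np) * Pp \<alpha> (c2+1) (Nm-1))"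
    (is "_ = smult ?C1 ?g1 + smult ?C2 ?g2")
proof -
  define r1 where "r1 = \<alpha>*(c1 - 1 + 2*of_nat Np)"
  define r2 where "r2 = \<alpha>*(c2-1+2*of_nat Nm)"
  define E1 where "E1 = [:-r1,1:]"
  define E2 where "E2 = [:-r2,1:]"
  define L1 where "L1 = [:-(\<alpha>*(c1-1)),1::complex:]"
  define L2 where "L2 = [:-(\<alpha>*(c2-1)),1::complex:]"
  define H where "H = Pp \<alpha> (c1+1) Np * Pp \<alpha> (c2+1) Nm"
  define H' where "H' = Pp \<alpha> (c1-1) Np * Pp \<alpha> (c2+1) Nm"
  define fp where "fp = Pp \<alpha> (c1-1) Np * Pp \<alpha> (c2-1) Nm"
  have F1: "Pp \<alpha> (c1-1) Np * E1 = L1 * Pp \<alpha> (c1+1) Np"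
    using Pp_ext[of \<alpha> "c1-1" Np] by (simp add: E1_def L1_def r1_def algebra_simps)
  have F2: "Pp \<alpha> (c2-1) Nm * E2 = L2 * Pp \<alpha> (c2+1) Nm"
    using Pp_ext[of \<alpha> "c2-1" Nm] by (simp add: E2_def L2_def r2_def algebra_simps)
  have fpE: "fp * (L1*E2) = L2*L1*H'"
  proof -
    have "fp * (L1*E2) = L1 * Pp \<alpha> (c1-1) Np * (Pp \<alpha> (c2-1) Nm * E2)" by (simp add: fp_def ac_simps)
    also have "\<dots> = L2*L1*H'" unfolding F2 by (simp add: H'_def ac_simps)
    finally show ?thesis .
  qed
  have HE: "H * (L1*E2) = H' * (E1*E2)"
  proof -
    have "H * (L1*E2) = (L1 * Pp \<alpha> (c1+1) Np) * Pp \<alpha> (c2+1) Nm * E2" by (simp add: H_def ac_simps)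
    also have "\<dots> = H' * (E1*E2)" unfolding F1[symmetric] by (simp add: H'_def ac_simps)
    finally show ?thesis .
  qed
  have Dm: "Dminus \<alpha> (Pp \<alpha> c1 Np * Pp \<alpha> c2 Nm) = smult (1/2) (fp - H)"
    by (simp add: Dminus_def pcompose_mult Pp_shift_plus Pp_shift_minus fp_def H_def)
  have Dp: "Dplus \<alpha> (Pp \<alpha> c1 Np * Pp \<alpha> c2 Nm) = smult (1/2) (fp + H)"
    by (simp add: Dplus_def pcompose_mult Pp_shift_plus Pp_shift_minus fp_def H_def)
  have bg: "\<beta>+\<gamma> = \<alpha>*(c1-1)" using assms by simp
  have r12: "r1 \<noteq> r2" using assms(2) by (simp add: r1_def r2_def)
  have core: "[:\<beta>,-1:] * smult (1/2) (L2*L1 - E1*E2) - smult \<gamma> (smult (1/2) (L2*L1 + E1*E2))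
       = smult ?C1 (L1*E2) + smult ?C2 (L1*E1)"
    using core_quad[OF bg r12, of "\<alpha>*(c2-1)"] by (simp add: L1_def L2_def E1_def E2_def r1_def r2_def)
  have lhsE: "Op \<alpha> \<beta> \<gamma> (Pp \<alpha> c1 Np * Pp \<alpha> c2 Nm) * (L1*E2) = H' * (smult ?C1 (L1*E2) + smult ?C2 (L1*E1))"
  proof -
    have "Op \<alpha> \<beta> \<gamma> (Pp \<alpha> c1 Np * Pp \<alpha> c2 Nm) * (L1*E2)
       = [:\<beta>,-1:] * smult (1/2) (fp*(L1*E2) - H*(L1*E2)) - smult \<gamma> (smult (1/2) (fp*(L1*E2) + H*(L1*E2)))"
      unfolding Op_def Dm Dp sm using ring_aux1 by blast
    also have "\<dots> = H' * ([:\<beta>,-1:] * smult (1/2) (L2*L1 - E1*E2) - smult \<gamma> (smult (1/2) (L2*L1 + E1*E2)))"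
      unfolding fpE HE sm by (rule ring_aux2)
    finally show ?thesis unfolding core .
  qed
  have rhs1: "?g1 * (L1*E2) = H' * (L1*E2)" by (simp add: H'_def)
  have rhs2: "smult ?C2 ?g2 * (L1*E2) = smult ?C2 (H' * (L1*E1))"
  proof (cases Nm)
    case 0
    then show ?thesis by simp
  next
    case (Suc N)
    have h1: "Pp \<alpha> (c2+1) (Nm-1) * E2 = Pp \<alpha> (c2+1) Nm"
      using Pp_Suc_right[of \<alpha> "c2+1" N] Suc by (simp add: E2_def r2_def algebra_simps)
    have h2: "Pp \<alpha> (c1-1) (Suc Np) = Pp \<alpha> (c1-1) Np * E1"
      using Pp_Suc_right[of \<alpha> "c1-1" Np] by (simp add: E1_def r1_def algebra_simps)
    have "?g2 * (L1*E2) = H' * (L1*E1)"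
    proof -
      have "?g2 * (L1*E2) = Pp \<alpha> (c1-1) (Suc Np) * (Pp \<alpha> (c2+1) (Nm-1) * E2) * L1" by (simp add: ac_simps)
      also have "\<dots> = H' * (L1*E1)" unfolding h1 h2 by (simp add: H'_def ac_simps)
      finally show ?thesis .
    qed
    then show ?thesis by (simp only: mult_smult_left)
  qed
  have "(smult ?C1 ?g1 + smult ?C2 ?g2) * (L1*E2) = H' * (smult ?C1 (L1*E2) + smult ?C2 (L1*E1))"
  proof -
    have "(smult ?C1 ?g1 + smult ?C2 ?g2) * (L1*E2) = smult ?C1 (?g1 * (L1*E2)) + smult ?C2 ?g2 * (L1*E2)"
      by (simp only: distrib_right mult_smult_left)
    also have "\<dots> = smult ?C1 (H' * (L1*E2)) + smult ?C2 (H' * (L1*E1))" by (simp only: rhs1 rhs2)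
    also have "\<dots> = H' * (smult ?C1 (L1*E2) + smult ?C2 (L1*E1))" by (simp only: mult_smult_right distrib_left)
    finally show ?thesis .
  qed
  moreover have "L1*E2 \<noteq> 0" by (simp add: L1_def E2_def)
  ultimately show ?thesis using lhsE by (metis mult_cancel_right)
qed


lemma prod_rev: "(\<Prod>p\<in>{1..(N::nat)}. f p) = (\<Prod>i<N. f (N - i))"
  by (rule prod.reindex_bij_witness[of _ "\<lambda>p. N - p" "\<lambda>i. N - i"]) (auto simp: diff_diff_cancel)

definition valid :: "nat \<Rightarrow> int \<Rightarrow> int \<Rightarrow> bool" where
  "valid n a b \<longleftrightarrow> (int n + b - a) mod 2 = 0 \<and> 0 \<le> int n + b - a \<and> 0 \<le> int n - b + a"

lemma psi_invalid: "\<not> valid n a b \<Longrightarrow> psi \<alpha> s t n u a b = 0"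
  by (simp add: psi_def valid_def)

lemma psi_repr:
  assumes "valid n a b"
  shows "psi \<alpha> s t n 0 a b = smult ((-1)^n)
     (Pp \<alpha> (1 - of_int b - t) (nat ((int n + b - a) div 2)) * Pp \<alpha> (of_int b + 1 + s) (nat ((int n - b + a) div 2)))"
proof -
  define N1 where "N1 = nat ((int n + b - a) div 2)"
  define N2 where "N2 = nat ((int n - b + a) div 2)"
  have e1: "2 * int N1 = int n + b - a" using assms unfolding valid_def N1_def by auto
  have e2: "2 * int N2 = int n - b + a" using assms unfolding valid_def N2_def by auto
  have e1c: "2 * (of_nat N1::complex) = of_nat n + of_int b - of_int a"
    using arg_cong[OF e1, of "of_int :: int \<Rightarrow> complex"] by simp
  have e2c: "2 * (of_nat N2::complex) = of_nat n - of_int b + of_int a"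
    using arg_cong[OF e2, of "of_int :: int \<Rightarrow> complex"] by simp
  have p1: "(\<Prod>p\<in>{1..N1}. [: - (\<alpha> * (0 + of_nat n - of_int a - 2 * of_nat p + 1 - t)), 1 :]) = Pp \<alpha> (1 - of_int b - t) N1"
    unfolding prod_rev Pp_def
  proof (intro prod.cong refl)
    fix i assume "i \<in> {..<N1}"
    then have x: "of_nat (N1 - i) = ((of_nat n + of_int b - of_int a)/2 - of_nat i :: complex)" using e1c by (simp add: of_nat_diff mult.commute)
    show "[: - (\<alpha> * (0 + of_nat n - of_int a - 2 * of_nat (N1 - i) + 1 - t)), 1 :] = [:-(\<alpha>*(1 - of_int b - t + 2*of_nat i)), 1:]"
      unfolding x by (simp add: field_simps)
  qed
  have p2: "(\<Prod>q\<in>{1..N2}. [: - (\<alpha> * (0 + of_nat n + of_int a - 2 * of_nat q + 1 + s)), 1 :]) = Pp \<alpha> (of_int b + 1 + s) N2"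
    unfolding prod_rev Pp_def
  proof (intro prod.cong refl)
    fix i assume "i \<in> {..<N2}"
    then have x: "of_nat (N2 - i) = ((of_nat n - of_int b + of_int a)/2 - of_nat i :: complex)" using e2c by (simp add: of_nat_diff mult.commute)
    show "[: - (\<alpha> * (0 + of_nat n + of_int a - 2 * of_nat (N2 - i) + 1 + s)), 1 :] = [:-(\<alpha>*(of_int b + 1 + s + 2*of_nat i)), 1:]"
      unfolding x by (simp add: field_simps)
  qed
  show ?thesis using assms unfolding psi_def valid_def p1[unfolded N1_def] p2[unfolded N2_def] N1_def N2_def
    by simp
qed


lemma ag1: fixes A B C D :: "'a::ab_group_add" shows "(A+B) - (C+D) = (A - C) + (B - D)" by (simp add: algebra_simps)
lemma Dm_add: "Dminus \<alpha> (f+g) = Dminus \<alpha> f + Dminus \<alpha> g"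
  unfolding Dminus_def pcompose_add ag1 smult_add_right ..
lemma Dp_add: "Dplus \<alpha> (f+g) = Dplus \<alpha> f + Dplus \<alpha> g"
  by (simp add: Dplus_def pcompose_add smult_add_right[symmetric] ac_simps)
lemma Dm_smult: "Dminus \<alpha> (smult c f) = smult c (Dminus \<alpha> f)"
  by (simp add: Dminus_def pcompose_smult smult_diff_right)
lemma Dp_smult: "Dplus \<alpha> (smult c f) = smult c (Dplus \<alpha> f)"
  by (simp add: Dplus_def pcompose_smult smult_add_right)
lemma ring_aux3: fixes Z a b c d :: "'a::comm_ring"
  shows "Z*(a+b) - (c+d) = (Z*a - c) + (Z*b - d)" by (simp add: algebra_simps)

lemma Op_add: "Op \<alpha> \<beta> \<gamma> (f + g) = Op \<alpha> \<beta> \<gamma> f + Op \<alpha> \<beta> \<gamma> g"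
  unfolding Op_def Dm_add Dp_add smult_add_right by (rule ring_aux3)

lemma Op_smult: "Op \<alpha> \<beta> \<gamma> (smult c f) = smult c (Op \<alpha> \<beta> \<gamma> f)"
  unfolding Op_def Dm_smult Dp_smult by (simp only: mult_smult_right smult_diff_right smult_smult mult.commute[of c \<gamma>])

lemma lin_sum:
  fixes F :: "complex poly \<Rightarrow> complex poly"
  assumes addF: "\<And>f g. F (f+g) = F f + F g"
  shows "F (\<Sum>i\<in>A. g i) = (\<Sum>i\<in>A. F (g i))"
proof -
  have z: "F 0 = 0" using addF[of 0 0] by simp
  show ?thesis
  proof (induction A rule: infinite_finite_induct)
    case (infinite A) then show ?case by (simp add: z)
  next
    case empty then show ?case by (simp add: z)
  next
    case (insert x F) then show ?case by (simp add: addF)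
  qed
qed

lemma block_gen:
  fixes F :: "nat \<Rightarrow> complex poly \<Rightarrow> complex poly" and Q :: "nat \<Rightarrow> nat \<Rightarrow> complex poly"
    and up dn cc :: "nat \<Rightarrow> nat \<Rightarrow> complex"
  assumes addF: "\<And>l f g. F l (f+g) = F l f + F l g"
    and smF: "\<And>l c f. F l (smult c f) = smult c (F l f)"
    and step: "\<And>i j. smult (cc i j) (F (i+j) (Q i j)) =
        smult (cc i j) (smult (up i j) (Q i (Suc j)) + smult (dn i j) (Q (Suc i) j))"
    and c00: "cc 0 0 = 1"
    and r1: "\<And>j. cc 0 (Suc j) = cc 0 j * up 0 j"
    and r2: "\<And>i. cc (Suc i) 0 = cc i 0 * dn i 0"
    and r3: "\<And>i j. cc (Suc i) (Suc j) = cc (Suc i) j * up (Suc i) j + cc i (Suc j) * dn i (Suc j)"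
  shows "opprod F k (Q 0 0) = (\<Sum>j\<le>k. smult (cc (k-j) j) (Q (k-j) j))"
proof (induction k)
  case 0
  then show ?case by (simp add: c00)
next
  case (Suc k)
  define U where "U j = smult (cc (k-j) j * up (k-j) j) (Q (k-j) (Suc j))" for j
  define D where "D j = smult (cc (k-j) j * dn (k-j) j) (Q (Suc (k-j)) j)" for j
  have "opprod F (Suc k) (Q 0 0) = (\<Sum>j\<le>k. smult (cc (k-j) j) (F k (Q (k-j) j)))"
    using Suc.IH by (simp add: lin_sum[of "F k", OF addF] smF)
  also have "\<dots> = (\<Sum>j\<le>k. U j + D j)"
  proof (intro sum.cong refl)
    fix j assume "j \<in> {..k}"
    then have "k = (k-j) + j" by simp
    then have "smult (cc (k-j) j) (F k (Q (k-j) j)) = smult (cc (k-j) j) (F ((k-j)+j) (Q (k-j) j))" by simp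
    also have "\<dots> = U j + D j" unfolding step U_def D_def by (simp add: smult_add_right)
    finally show "smult (cc (k-j) j) (F k (Q (k-j) j)) = U j + D j" .
  qed
  also have "\<dots> = (\<Sum>j\<le>k. U j) + (\<Sum>j\<le>k. D j)" by (simp add: sum.distrib)
  also have "(\<Sum>j\<le>k. D j) = D 0 + (\<Sum>j<k. D (Suc j))"
    unfolding lessThan_Suc_atMost[symmetric] sum.lessThan_Suc_shift ..
  finally have L0: "opprod F (Suc k) (Q 0 0) = (\<Sum>j\<le>k. U j) + (D 0 + (\<Sum>j<k. D (Suc j)))" .
  have "(\<Sum>j\<le>k. if j < k then D (Suc j) else 0) = (\<Sum>j<k. if j < k then D (Suc j) else 0) + 0"
    unfolding lessThan_Suc_atMost[symmetric] sum.lessThan_Suc by simp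
  also have "\<dots> = (\<Sum>j<k. D (Suc j))" by simp
  finally have L1: "(\<Sum>j\<le>k. U j + (if j < k then D (Suc j) else 0)) = (\<Sum>j\<le>k. U j) + (\<Sum>j<k. D (Suc j))"
    by (simp only: sum.distrib)
  have L: "opprod F (Suc k) (Q 0 0) = D 0 + (\<Sum>j\<le>k. U j + (if j < k then D (Suc j) else 0))"
    unfolding L0 L1 by (simp only: ac_simps)
  have T0: "smult (cc (Suc k - 0) 0) (Q (Suc k - 0) 0) = D 0" by (simp add: D_def r2)
  have TS: "smult (cc (Suc k - Suc j) (Suc j)) (Q (Suc k - Suc j) (Suc j)) = U j + (if j < k then D (Suc j) else 0)"
    if "j \<le> k" for j
  proof (cases "j < k")
    case True
    then obtain i where i: "k - j = Suc i" by (metis Suc_diff_Suc)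
    then have i2: "k - Suc j = i" by simp
    show ?thesis using True by (simp add: U_def D_def i i2 r3 smult_add_left)
  next
    case False
    with that have "j = k" by simp
    then show ?thesis by (simp add: U_def r1)
  qed
  have "(\<Sum>j\<le>Suc k. smult (cc (Suc k - j) j) (Q (Suc k - j) j))
       = D 0 + (\<Sum>j\<le>k. U j + (if j < k then D (Suc j) else 0))"
    unfolding sum.atMost_Suc_shift T0
    apply (intro arg_cong2[where f="(+)"] refl sum.cong)
    apply (rule TS) apply simp done
  then show ?case using L by (simp only:)
qed


definition cb :: "complex \<Rightarrow> complex \<Rightarrow> complex \<Rightarrow> complex \<Rightarrow> complex \<Rightarrow> nat \<Rightarrow> nat \<Rightarrow> complex" where
  "cb x p1 p2 p3 p4 i j = (x + of_nat j - of_nat i) / x * of_nat ((i+j) choose j)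
      * falling p1 j * rising p2 j * falling p3 i * falling p4 i
      / (rising (x+1) j * falling (x-1) i)"

definition upc :: "complex \<Rightarrow> complex \<Rightarrow> complex \<Rightarrow> nat \<Rightarrow> nat \<Rightarrow> complex" where
  "upc x p1 p2 i j = (p1 - of_nat j) * (p2 + of_nat j) / (x + of_nat j - of_nat i)"

definition dnc :: "complex \<Rightarrow> complex \<Rightarrow> complex \<Rightarrow> nat \<Rightarrow> nat \<Rightarrow> complex" where
  "dnc x p3 p4 i j = (p3 - of_nat i) * (p4 - of_nat i) / (x + of_nat j - of_nat i)"

lemma falling_Suc: "falling y (Suc i) = falling y i * (y - of_nat i)"
  by (simp add: falling_def)
lemma rising_Suc: "rising y (Suc i) = rising y i * (y + of_nat i)"
  by (simp add: rising_def)
lemma falling_0[simp]: "falling y 0 = 1" by (simp add: falling_def)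
lemma rising_0[simp]: "rising y 0 = 1" by (simp add: rising_def)

lemma hxe: "\<forall>k::int. x + of_int k \<noteq> (0::complex) \<Longrightarrow> y = x + of_int k \<Longrightarrow> y \<noteq> 0" by simp

lemma xnz: assumes "\<forall>k::int. x + of_int k \<noteq> (0::complex)" shows "x + of_int k \<noteq> 0"
  using assms by blast

lemma rising_nz: assumes "\<forall>k::int. x + of_int k \<noteq> (0::complex)" shows "rising (x+1) j \<noteq> 0"
  unfolding rising_def
proof -
  have "x + 1 + of_nat i \<noteq> 0" for i
  proof -
    have "x + 1 + of_nat i = x + of_int (1 + int i)" by simp
    then show ?thesis using assms by metis
  qed
  then show "(\<Prod>i<j. x + 1 + of_nat i) \<noteq> 0" by (simp add: prod_zero_iff)
qed

lemma falling_nz: assumes "\<forall>k::int. x + of_int k \<noteq> (0::complex)" shows "falling (x-1) j \<noteq> 0"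
  unfolding falling_def
proof -
  have "x - 1 - of_nat i \<noteq> 0" for i
  proof -
    have "x - 1 - of_nat i = x + of_int (- 1 - int i)" by simp
    then show ?thesis using assms by metis
  qed
  then show "(\<Prod>i<j. x - 1 - of_nat i) \<noteq> 0" by (simp add: prod_zero_iff)
qed

lemma cb_00: assumes "\<forall>k::int. x + of_int k \<noteq> (0::complex)" shows "cb x p1 p2 p3 p4 0 0 = 1"
  using assms[rule_format, of 0] by (simp add: cb_def)

lemma cb_r1: assumes hx: "\<forall>k::int. x + of_int k \<noteq> (0::complex)"
  shows "cb x p1 p2 p3 p4 0 (Suc j) = cb x p1 p2 p3 p4 0 j * upc x p1 p2 0 j"
proof -
  have a: "x \<noteq> 0" using hx[rule_format, of 0] by simp
  have b: "x + of_nat j \<noteq> 0" using hx[rule_format, of "int j"] by simp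
  have c: "x + 1 + of_nat j \<noteq> 0" by (rule hxe[OF hx, of _ "int j + 1"]) simp
  have R: "rising (x+1) j \<noteq> 0" by (rule rising_nz[OF hx])
  show ?thesis unfolding cb_def upc_def falling_Suc rising_Suc
    using a b c R by (simp add: divide_simps; (simp add: algebra_simps)?)
qed

lemma cb_r2: assumes hx: "\<forall>k::int. x + of_int k \<noteq> (0::complex)"
  shows "cb x p1 p2 p3 p4 (Suc i) 0 = cb x p1 p2 p3 p4 i 0 * dnc x p3 p4 i 0"
proof -
  have a: "x \<noteq> 0" using hx[rule_format, of 0] by simp
  have b: "x - of_nat i \<noteq> 0" using hx[rule_format, of "- int i"] by simp
  have c: "x - 1 - of_nat i \<noteq> 0" by (rule hxe[OF hx, of _ "- int i - 1"]) simp
  have F: "falling (x-1) i \<noteq> 0" by (rule falling_nz[OF hx])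
  show ?thesis unfolding cb_def dnc_def falling_Suc rising_Suc
    using a b c F by (simp add: divide_simps; (simp add: algebra_simps)?)
qed


lemma lin_key: fixes A B x i j :: complex
  assumes "(j+1)*B = (i+1)*A" shows "(A+B)*(x+j-i) = A*(x+1+j) + B*(x-1-i)"
proof -
  have "(A+B)*(x+j-i) - (A*(x+1+j) + B*(x-1-i)) = (j+1)*B - (i+1)*A" by (simp add: algebra_simps)
  then show ?thesis using assms by simp
qed

lemma binom_key: "of_nat ((Suc i + Suc j) choose Suc j) * (x + of_nat j - of_nat i)
   = of_nat ((Suc i + j) choose j) * (x + 1 + of_nat j) + of_nat ((i + Suc j) choose Suc j) * (x - 1 - of_nat i :: complex)"
proof -
  have e1: "(Suc i + Suc j) choose Suc j = (Suc (i+j) choose j) + (Suc (i+j) choose Suc j)"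
    by (simp add: add_ac)
  have e2: "Suc j * (Suc (j + i) choose Suc j) = Suc i * (Suc (j+i) choose j)"
    by (rule Suc_times_binomial_add)
  have e2c: "(of_nat j + 1) * of_nat (Suc (i+j) choose Suc j) = (of_nat i + 1) * (of_nat (Suc (i+j) choose j) :: complex)"
    using arg_cong[OF e2, of "of_nat :: nat \<Rightarrow> complex"] by (simp only: of_nat_mult of_nat_Suc add.commute[of _ 1] add.commute[of j i])
  have s1: "Suc i + j = Suc (i+j)" "i + Suc j = Suc (i+j)" by simp_all
  show ?thesis unfolding e1 s1 of_nat_add by (rule lin_key[OF e2c])
qed

lemma cb_r3: assumes hx: "\<forall>k::int. x + of_int k \<noteq> (0::complex)"
  shows "cb x p1 p2 p3 p4 (Suc i) (Suc j) = cb x p1 p2 p3 p4 (Suc i) j * upc x p1 p2 (Suc i) j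
           + cb x p1 p2 p3 p4 i (Suc j) * dnc x p3 p4 i (Suc j)"
proof -
  have a: "x \<noteq> 0" using hx[rule_format, of 0] by simp
  have b1: "x + of_nat j - of_nat i \<noteq> 0" by (rule hxe[OF hx, of _ "int j - int i"]) simp
  have b2: "x + of_nat j - (1 + of_nat i) \<noteq> 0" by (rule hxe[OF hx, of _ "int j - int i - 1"]) simp
  have b3: "x + (1 + of_nat j) - of_nat i \<noteq> 0" by (rule hxe[OF hx, of _ "int j - int i + 1"]) simp
  have c: "x + 1 + of_nat j \<noteq> 0" by (rule hxe[OF hx, of _ "int j + 1"]) simp
  have d: "x - 1 - of_nat i \<noteq> 0" by (rule hxe[OF hx, of _ "- int i - 1"]) simp
  have R: "rising (x+1) j \<noteq> 0" by (rule rising_nz[OF hx])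
  have F: "falling (x-1) i \<noteq> 0" by (rule falling_nz[OF hx])
  define K where "K = falling p1 j * (p1 - of_nat j) * (rising p2 j * (p2 + of_nat j)) * (falling p3 i * (p3 - of_nat i)) * (falling p4 i * (p4 - of_nat i))
     / (x * rising (x+1) j * falling (x-1) i)"
  have L: "cb x p1 p2 p3 p4 (Suc i) (Suc j) = K * (of_nat ((Suc i + Suc j) choose Suc j) * (x + of_nat j - of_nat i)) / ((x + 1 + of_nat j) * (x - 1 - of_nat i))"
    unfolding cb_def K_def falling_Suc rising_Suc using a c d R F by (simp add: divide_simps; (simp add: algebra_simps)?)
  have R1: "cb x p1 p2 p3 p4 (Suc i) j * upc x p1 p2 (Suc i) j = K * of_nat ((Suc i + j) choose j) / (x - 1 - of_nat i)"
    unfolding cb_def upc_def K_def falling_Suc rising_Suc using a b2 d R F by (simp add: divide_simps; (simp add: algebra_simps)?)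
  have R2: "cb x p1 p2 p3 p4 i (Suc j) * dnc x p3 p4 i (Suc j) = K * of_nat ((i + Suc j) choose Suc j) / (x + 1 + of_nat j)"
    unfolding cb_def dnc_def K_def falling_Suc rising_Suc using a b3 c R F by (simp add: divide_simps; (simp add: algebra_simps)?)
  show ?thesis unfolding L R1 R2 binom_key using c d by (simp add: divide_simps; (simp add: algebra_simps)?)
qed


lemma w_nonint: assumes "(s + t) / 2 \<notin> \<int>" shows "of_int k + (s+t)/2 \<noteq> (0::complex)"
proof
  assume "of_int k + (s+t)/2 = 0"
  then have "(s+t)/2 = - of_int k" by (simp only: add_eq_0_iff)
  then have "(s+t)/2 = of_int (-k)" by simp
  then show False using assms by (metis Ints_of_int)
qed

lemma valid_counts:
  assumes "valid n a b"
  shows "2 * (of_nat (nat ((int n + b - a) div 2)) :: complex) = of_nat n + of_int b - of_int a"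
    "2 * (of_nat (nat ((int n - b + a) div 2)) :: complex) = of_nat n - of_int b + of_int a"
proof -
  have e1: "2 * int (nat ((int n + b - a) div 2)) = int n + b - a" using assms unfolding valid_def by auto
  have e2: "2 * int (nat ((int n - b + a) div 2)) = int n - b + a" using assms unfolding valid_def by auto
  show "2 * (of_nat (nat ((int n + b - a) div 2)) :: complex) = of_nat n + of_int b - of_int a"
    using arg_cong[OF e1, of "of_int :: int \<Rightarrow> complex"] by (simp only: of_int_mult of_int_numeral of_int_of_nat_eq of_int_add of_int_diff)
  show "2 * (of_nat (nat ((int n - b + a) div 2)) :: complex) = of_nat n - of_int b + of_int a"
    using arg_cong[OF e2, of "of_int :: int \<Rightarrow> complex"] by (simp only: of_int_mult of_int_numeral of_int_of_nat_eq of_int_add of_int_diff)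
qed

lemma psi_stepB:
  fixes \<alpha> s t g :: complex and n :: nat and a b :: int
  assumes v: "valid n a b" and al: "\<alpha> \<noteq> 0" and w: "(s + t) / 2 \<notin> \<int>"
    and bg: "\<beta> + \<alpha>*g = \<alpha>*(of_int b + s)"
  defines "Np \<equiv> nat ((int n + b - a) div 2)" and "Nm \<equiv> nat ((int n - b + a) div 2)"
  shows "smult (inverse (-\<alpha>)) (Op \<alpha> \<beta> (\<alpha>*g) (psi \<alpha> s t n 0 a b)) =
     smult (of_nat Np * (of_int b + (s+t)/2 - g - of_nat Np) / (of_int a + (s+t)/2)) (psi \<alpha> s t n 0 (a+1) (b-1))
   + smult ((g + of_nat Nm) * (of_int b + (s+t)/2 + of_nat Nm) / (of_int a + (s+t)/2)) (psi \<alpha> s t n 0 (a-1) (b-1))"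
proof -
  define c1 where "c1 = 1 - of_int b - t"
  define c2 where "c2 = of_int b + 1 + s"
  define x where "x = of_int a + (s+t)/2"
  have xnz: "x \<noteq> 0" unfolding x_def by (rule w_nonint[OF w])
  have cN: "2 * of_nat Np = (of_nat n + of_int b - of_int a :: complex)" "2 * of_nat Nm = (of_nat n - of_int b + of_int a :: complex)"
    using valid_counts[OF v] unfolding Np_def Nm_def by auto
  have P: "psi \<alpha> s t n 0 a b = smult ((-1)^n) (Pp \<alpha> c1 Np * Pp \<alpha> c2 Nm)"
    using psi_repr[OF v] unfolding c1_def c2_def Np_def Nm_def .
  have bg': "\<beta> + \<alpha>*g = \<alpha>*(c2-1)" using bg by (simp add: c2_def)
  have r: "\<alpha>*(c1 - 1 + 2*of_nat Np) \<noteq> \<alpha>*(c2-1+2*of_nat Nm)"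
  proof
    assume "\<alpha>*(c1 - 1 + 2*of_nat Np) = \<alpha>*(c2-1+2*of_nat Nm)"
    then have "c1 - 1 + 2*of_nat Np = c2-1+2*of_nat Nm" using al by simp
    then have "x = 0" unfolding c1_def c2_def cN x_def by (simp add: field_simps)
    then show False using xnz by simp
  qed
  note S = stepB[OF bg' r]
  have V2: "valid n (a-1) (b-1)" using v unfolding valid_def by presburger
  have P2: "psi \<alpha> s t n 0 (a-1) (b-1) = smult ((-1)^n) (Pp \<alpha> (c1+1) Np * Pp \<alpha> (c2-1) Nm)"
    using psi_repr[OF V2] unfolding c1_def c2_def Np_def Nm_def by (simp add: algebra_simps)
  define C1 where "C1 = (\<alpha>*(c1 - 1 + 2*of_nat Np) - \<alpha>*(c1-1))*(\<beta>-\<alpha>*g-\<alpha>*(c1 - 1 + 2*of_nat Np))/(2*(\<alpha>*(c1 - 1 + 2*of_nat Np)-\<alpha>*(c2-1+2*of_nat Nm)))"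
  define C2 where "C2 = (\<beta>-\<alpha>*g-\<alpha>*(c2-1+2*of_nat Nm))*(\<alpha>*(c2-1+2*of_nat Nm)-\<alpha>*(c1-1))/(2*(\<alpha>*(c2-1+2*of_nat Nm)-\<alpha>*(c1 - 1 + 2*of_nat Np)))"
  have beta: "\<beta> = \<alpha>*(of_int b + s) - \<alpha>*g" using bg by (simp add: algebra_simps)
  have d: "\<alpha>*(c1 - 1 + 2*of_nat Np)-\<alpha>*(c2-1+2*of_nat Nm) = -2*\<alpha>*x"
    unfolding c1_def c2_def cN x_def by (simp add: field_simps)
  have C1e: "inverse (-\<alpha>) * C1 = of_nat Np * (of_int b + (s+t)/2 - g - of_nat Np) / x"
    unfolding C1_def d unfolding beta c1_def using al xnz by (simp add: field_simps)
  have C2e: "inverse (-\<alpha>) * C2 = (g + of_nat Nm) * (of_int b + (s+t)/2 + of_nat Nm) / x"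
  proof -
    have d2: "\<alpha>*(c2-1+2*of_nat Nm)-\<alpha>*(c1 - 1 + 2*of_nat Np) = 2*\<alpha>*x" using d by (simp add: algebra_simps)
    show ?thesis unfolding C2_def d2 unfolding beta c1_def c2_def using al xnz by (simp add: field_simps)
  qed
  define G1 where "G1 = Pp \<alpha> (c1+1) (Np-1) * Pp \<alpha> (c2-1) (Suc Nm)"
  define G2 where "G2 = Pp \<alpha> (c1+1) Np * Pp \<alpha> (c2-1) Nm"
  have T1': "smult (inverse (-\<alpha>)*C1) (smult ((-1)^n) G1) = smult (inverse (-\<alpha>)*C1) (psi \<alpha> s t n 0 (a+1) (b-1))"
  proof (cases "Np = 0")
    case True
    then have "C1 = 0" unfolding C1_def by simp
    then show ?thesis by simp
  next
    case False
    have "(int n + b - a) div 2 > 0" using False unfolding Np_def by simp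
    then have V1: "valid n (a+1) (b-1)" using v unfolding valid_def by presburger
    have e1: "nat ((int n + (b-1) - (a+1)) div 2) = Np - 1" unfolding Np_def using v unfolding valid_def by auto
    have e2: "nat ((int n - (b-1) + (a+1)) div 2) = Suc Nm" unfolding Nm_def using v unfolding valid_def by auto
    have "psi \<alpha> s t n 0 (a+1) (b-1) = smult ((-1)^n) G1"
      using psi_repr[OF V1] unfolding e1 e2 c1_def c2_def G1_def by (simp add: algebra_simps)
    then show ?thesis by simp
  qed
  have "smult (inverse (-\<alpha>)) (Op \<alpha> \<beta> (\<alpha>*g) (psi \<alpha> s t n 0 a b))
      = smult (inverse (-\<alpha>)*C1) (smult ((-1)^n) G1) + smult (inverse (-\<alpha>)*C2) (smult ((-1)^n) G2)"
    unfolding P Op_smult S[folded C1_def C2_def G1_def G2_def] by (simp add: smult_add_right ac_simps)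
  also have "\<dots> = smult (inverse (-\<alpha>)*C1) (psi \<alpha> s t n 0 (a+1) (b-1)) + smult (inverse (-\<alpha>)*C2) (psi \<alpha> s t n 0 (a-1) (b-1))"
    unfolding T1' P2 G2_def ..
  finally show ?thesis unfolding C1e C2e x_def .
qed

lemma psi_stepA:
  fixes \<alpha> s t g :: complex and n :: nat and a b :: int
  assumes v: "valid n a b" and al: "\<alpha> \<noteq> 0" and w: "(s + t) / 2 \<notin> \<int>"
    and bg: "\<beta> + \<alpha>*g = \<alpha>*(- of_int b - t)"
  defines "Np \<equiv> nat ((int n + b - a) div 2)" and "Nm \<equiv> nat ((int n - b + a) div 2)"
  shows "smult (inverse (-\<alpha>)) (Op \<alpha> \<beta> (\<alpha>*g) (psi \<alpha> s t n 0 a b)) =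
     smult ((g + of_nat Np) * (of_int b + (s+t)/2 - of_nat Np) / (of_int a + (s+t)/2)) (psi \<alpha> s t n 0 (a+1) (b+1))
   + smult (of_nat Nm * (of_int b + (s+t)/2 + g + of_nat Nm) / (of_int a + (s+t)/2)) (psi \<alpha> s t n 0 (a-1) (b+1))"
proof -
  define c1 where "c1 = 1 - of_int b - t"
  define c2 where "c2 = of_int b + 1 + s"
  define x where "x = of_int a + (s+t)/2"
  have xnz: "x \<noteq> 0" unfolding x_def by (rule w_nonint[OF w])
  have cN: "2 * of_nat Np = (of_nat n + of_int b - of_int a :: complex)" "2 * of_nat Nm = (of_nat n - of_int b + of_int a :: complex)"
    using valid_counts[OF v] unfolding Np_def Nm_def by auto
  have P: "psi \<alpha> s t n 0 a b = smult ((-1)^n) (Pp \<alpha> c1 Np * Pp \<alpha> c2 Nm)"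
    using psi_repr[OF v] unfolding c1_def c2_def Np_def Nm_def .
  have bg': "\<beta> + \<alpha>*g = \<alpha>*(c1-1)" using bg by (simp add: c1_def)
  have r: "\<alpha>*(c1 - 1 + 2*of_nat Np) \<noteq> \<alpha>*(c2-1+2*of_nat Nm)"
  proof
    assume "\<alpha>*(c1 - 1 + 2*of_nat Np) = \<alpha>*(c2-1+2*of_nat Nm)"
    then have "c1 - 1 + 2*of_nat Np = c2-1+2*of_nat Nm" using al by simp
    then have "x = 0" unfolding c1_def c2_def cN x_def by (simp add: field_simps)
    then show False using xnz by simp
  qed
  note S = stepA[OF bg' r]
  have V1: "valid n (a+1) (b+1)" using v unfolding valid_def by presburger
  have P1: "psi \<alpha> s t n 0 (a+1) (b+1) = smult ((-1)^n) (Pp \<alpha> (c1-1) Np * Pp \<alpha> (c2+1) Nm)"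
  proof -
    have a1: "1 - of_int (b+1) - t = c1 - 1" "of_int (b+1) + 1 + s = c2 + 1" unfolding c1_def c2_def by simp_all
    have a2: "nat ((int n + (b+1) - (a+1)) div 2) = Np" "nat ((int n - (b+1) + (a+1)) div 2) = Nm"
      unfolding Np_def Nm_def by (simp_all add: algebra_simps)
    show ?thesis using psi_repr[OF V1, of \<alpha> s t] unfolding a1 a2 .
  qed
  define C1 where "C1 = (\<alpha>*(c1 - 1 + 2*of_nat Np) - \<alpha>*(c2-1))*(\<beta>-\<alpha>*g-\<alpha>*(c1 - 1 + 2*of_nat Np))/(2*(\<alpha>*(c1 - 1 + 2*of_nat Np)-\<alpha>*(c2-1+2*of_nat Nm)))"
  define C2 where "C2 = (\<beta>-\<alpha>*g-\<alpha>*(c2-1+2*of_nat Nm))*(\<alpha>*(c2-1+2*of_nat Nm)-\<alpha>*(c2-1))/(2*(\<alpha>*(c2-1+2*of_nat Nm)-\<alpha>*(c1 - 1 + 2*of_nat Np)))"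
  have beta: "\<beta> = \<alpha>*(- of_int b - t) - \<alpha>*g" using bg by (simp add: algebra_simps)
  have d: "\<alpha>*(c1 - 1 + 2*of_nat Np)-\<alpha>*(c2-1+2*of_nat Nm) = -2*\<alpha>*x"
    unfolding c1_def c2_def cN x_def by (simp add: field_simps)
  have C1e: "inverse (-\<alpha>) * C1 = (g + of_nat Np) * (of_int b + (s+t)/2 - of_nat Np) / x"
    unfolding C1_def d unfolding beta c1_def c2_def using al xnz by (simp add: field_simps)
  have C2e: "inverse (-\<alpha>) * C2 = of_nat Nm * (of_int b + (s+t)/2 + g + of_nat Nm) / x"
  proof -
    have d2: "\<alpha>*(c2-1+2*of_nat Nm)-\<alpha>*(c1 - 1 + 2*of_nat Np) = 2*\<alpha>*x" using d by (simp add: algebra_simps)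
    show ?thesis unfolding C2_def d2 unfolding beta c1_def c2_def using al xnz by (simp add: field_simps)
  qed
  define G1 where "G1 = Pp \<alpha> (c1-1) Np * Pp \<alpha> (c2+1) Nm"
  define G2 where "G2 = Pp \<alpha> (c1-1) (Suc Np) * Pp \<alpha> (c2+1) (Nm-1)"
  have T2': "smult (inverse (-\<alpha>)*C2) (smult ((-1)^n) G2) = smult (inverse (-\<alpha>)*C2) (psi \<alpha> s t n 0 (a-1) (b+1))"
  proof (cases "Nm = 0")
    case True
    then have "C2 = 0" unfolding C2_def by simp
    then show ?thesis by simp
  next
    case False
    have "(int n - b + a) div 2 > 0" using False unfolding Nm_def by simp
    then have V2: "valid n (a-1) (b+1)" using v unfolding valid_def by presburger
    have e1: "nat ((int n + (b+1) - (a-1)) div 2) = Suc Np" unfolding Np_def using v unfolding valid_def by auto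
    have e2: "nat ((int n - (b+1) + (a-1)) div 2) = Nm - 1" unfolding Nm_def using v unfolding valid_def by auto
    have a1: "1 - of_int (b+1) - t = c1 - 1" "of_int (b+1) + 1 + s = c2 + 1" unfolding c1_def c2_def by simp_all
    have "psi \<alpha> s t n 0 (a-1) (b+1) = smult ((-1)^n) G2"
      using psi_repr[OF V2, of \<alpha> s t] unfolding e1 e2 a1 G2_def .
    then show ?thesis by simp
  qed
  have "smult (inverse (-\<alpha>)) (Op \<alpha> \<beta> (\<alpha>*g) (psi \<alpha> s t n 0 a b))
      = smult (inverse (-\<alpha>)*C1) (smult ((-1)^n) G1) + smult (inverse (-\<alpha>)*C2) (smult ((-1)^n) G2)"
    unfolding P Op_smult S[folded C1_def C2_def G1_def G2_def] by (simp add: smult_add_right ac_simps)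
  also have "\<dots> = smult (inverse (-\<alpha>)*C1) (psi \<alpha> s t n 0 (a+1) (b+1)) + smult (inverse (-\<alpha>)*C2) (psi \<alpha> s t n 0 (a-1) (b+1))"
    unfolding T2' P1 G1_def ..
  finally show ?thesis unfolding C1e C2e x_def .
qed


lemma falling_nat_zero: "N < j \<Longrightarrow> falling (of_nat N) j = 0"
  unfolding falling_def by (rule prod_zero) (auto intro!: bexI[of _ N])

lemma cb_zero1: "N < j \<Longrightarrow> cb x (of_nat N) p2 p3 p4 i j = 0"
  by (simp add: cb_def falling_nat_zero)

lemma cb_zero3: "N < i \<Longrightarrow> cb x p1 p2 (of_nat N) p4 i j = 0"
  by (simp add: cb_def falling_nat_zero)

lemma hx_gen: assumes "(s + t) / 2 \<notin> \<int>" shows "\<forall>k::int. (of_int a + (s+t)/2) + of_int k \<noteq> (0::complex)"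
proof
  fix k :: int
  have "(of_int a + (s+t)/2) + of_int k = of_int (a+k) + (s+t)/(2::complex)" by simp
  then show "(of_int a + (s+t)/2) + of_int k \<noteq> (0::complex)" using w_nonint[OF assms, of "a+k"] by metis
qed

lemma blockB:
  fixes \<alpha> s t u' :: complex and n :: nat and a b :: int
  assumes v: "valid n a b" and al: "\<alpha> \<noteq> 0" and w: "(s + t) / 2 \<notin> \<int>"
  defines "np \<equiv> nat ((int n + b - a) div 2)" and "nm \<equiv> nat ((int n - b + a) div 2)"
  shows "opprod (\<lambda>l g. smult (inverse (-\<alpha>)) (Op \<alpha> (\<alpha>*(of_int b + s - u')) (\<alpha>*(u' - of_nat l)) g)) k (psi \<alpha> s t n 0 a b)
    = (\<Sum>j\<le>k. smult (cb (of_int a + (s+t)/2) (of_nat np) (of_int b - of_nat np + (s+t)/2 - u') (u' + of_nat nm) (of_int b + of_nat nm + (s+t)/2) (k-j) j)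
          (psi \<alpha> s t n 0 (a + int j - int (k-j)) (b - int k)))"
proof -
  define x where "x = of_int a + (s+t)/(2::complex)"
  define p1 where "p1 = (of_nat np :: complex)"
  define p2 where "p2 = of_int b - of_nat np + (s+t)/2 - u'"
  define p3 where "p3 = u' + of_nat nm"
  define p4 where "p4 = of_int b + of_nat nm + (s+t)/(2::complex)"
  define F where "F = (\<lambda>l g. smult (inverse (-\<alpha>)) (Op \<alpha> (\<alpha>*(of_int b + s - u')) (\<alpha>*(u' - of_nat l)) g))"
  define Q where "Q = (\<lambda>i j. psi \<alpha> s t n 0 (a + int j - int i) (b - int i - int j))"
  have hx: "\<forall>k::int. x + of_int k \<noteq> 0" unfolding x_def by (rule hx_gen[OF w])
  have enp: "2 * int np = int n + b - a" "2 * int nm = int n - b + a" using v unfolding valid_def np_def nm_def by auto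
  have main: "opprod F k (Q 0 0) = (\<Sum>j\<le>k. smult (cb x p1 p2 p3 p4 (k-j) j) (Q (k-j) j))"
  proof (rule block_gen)
    show "\<And>l f g. F l (f + g) = F l f + F l g" unfolding F_def by (simp add: Op_add smult_add_right)
    show "\<And>l c f. F l (smult c f) = smult c (F l f)" unfolding F_def by (simp add: Op_smult mult.commute)
    show "cb x p1 p2 p3 p4 0 0 = 1" by (rule cb_00[OF hx])
    show "\<And>j. cb x p1 p2 p3 p4 0 (Suc j) = cb x p1 p2 p3 p4 0 j * upc x p1 p2 0 j" by (rule cb_r1[OF hx])
    show "\<And>i. cb x p1 p2 p3 p4 (Suc i) 0 = cb x p1 p2 p3 p4 i 0 * dnc x p3 p4 i 0" by (rule cb_r2[OF hx])
    show "\<And>i j. cb x p1 p2 p3 p4 (Suc i) (Suc j) = cb x p1 p2 p3 p4 (Suc i) j * upc x p1 p2 (Suc i) j + cb x p1 p2 p3 p4 i (Suc j) * dnc x p3 p4 i (Suc j)"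
      by (rule cb_r3[OF hx])
    fix i j
    show "smult (cb x p1 p2 p3 p4 i j) (F (i + j) (Q i j)) =
          smult (cb x p1 p2 p3 p4 i j) (smult (upc x p1 p2 i j) (Q i (Suc j)) + smult (dnc x p3 p4 i j) (Q (Suc i) j))"
    proof (cases "np < j")
      case True
      then show ?thesis unfolding p1_def by (simp add: cb_zero1)
    next
      case False
      define a' where "a' = a + int j - int i"
      define b' where "b' = b - int i - int j"
      have E1: "int n + b' - a' = 2 * (int np - int j)" using enp unfolding a'_def b'_def by simp
      have E2: "int n - b' + a' = 2 * (int nm + int j)" using enp unfolding a'_def b'_def by simp
      have vs: "valid n a' b'" unfolding valid_def E1 E2 using False by simp
      have bg: "\<alpha>*(of_int b + s - u') + \<alpha>*(u' - of_nat (i+j)) = \<alpha>*(of_int b' + s)"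
        unfolding b'_def by (simp add: algebra_simps)
      have Np: "nat ((int n + b' - a') div 2) = np - j"
      proof -
        show ?thesis unfolding E1 using False by simp
      qed
      have Nm: "nat ((int n - b' + a') div 2) = nm + j"
      proof -
        show ?thesis unfolding E2 by simp
      qed
      have S: "F (i+j) (Q i j) =
        smult (of_nat (np - j) * (of_int b' + (s+t)/2 - (u' - of_nat (i+j)) - of_nat (np - j)) / (of_int a' + (s+t)/2)) (psi \<alpha> s t n 0 (a'+1) (b'-1))
        + smult ((u' - of_nat (i+j) + of_nat (nm + j)) * (of_int b' + (s+t)/2 + of_nat (nm + j)) / (of_int a' + (s+t)/2)) (psi \<alpha> s t n 0 (a'-1) (b'-1))"
        unfolding F_def Q_def a'_def[symmetric] b'_def[symmetric]
        using psi_stepB[OF vs al w bg] unfolding Np Nm .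
      have Q1: "Q i (Suc j) = psi \<alpha> s t n 0 (a'+1) (b'-1)" unfolding Q_def a'_def b'_def by (simp add: algebra_simps)
      have Q2: "Q (Suc i) j = psi \<alpha> s t n 0 (a'-1) (b'-1)" unfolding Q_def a'_def b'_def by (simp add: algebra_simps)
      have xa: "of_int a' + (s+t)/2 = x + of_nat j - of_nat i" unfolding a'_def x_def by simp
      have c1: "of_nat (np - j) * (of_int b' + (s+t)/2 - (u' - of_nat (i+j)) - of_nat (np - j)) / (of_int a' + (s+t)/2) = upc x p1 p2 i j"
        unfolding upc_def xa p1_def p2_def b'_def using False by (simp add: of_nat_diff algebra_simps)
      have c2: "(u' - of_nat (i+j) + of_nat (nm + j)) * (of_int b' + (s+t)/2 + of_nat (nm + j)) / (of_int a' + (s+t)/2) = dnc x p3 p4 i j"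
        unfolding dnc_def xa p3_def p4_def b'_def by (simp add: algebra_simps)
      show ?thesis unfolding S Q1 Q2 c1 c2 ..
    qed
  qed
  have Q00: "Q 0 0 = psi \<alpha> s t n 0 a b" by (simp add: Q_def)
  have "(\<Sum>j\<le>k. smult (cb x p1 p2 p3 p4 (k-j) j) (Q (k-j) j)) = (\<Sum>j\<le>k. smult (cb x p1 p2 p3 p4 (k-j) j) (psi \<alpha> s t n 0 (a + int j - int (k-j)) (b - int k)))"
    by (intro sum.cong refl) (simp add: Q_def of_nat_diff)
  with main have "opprod F k (psi \<alpha> s t n 0 a b) = (\<Sum>j\<le>k. smult (cb x p1 p2 p3 p4 (k-j) j) (psi \<alpha> s t n 0 (a + int j - int (k-j)) (b - int k)))"
    unfolding Q00 by simp
  then show ?thesis unfolding F_def x_def p1_def p2_def p3_def p4_def .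
qed

lemma blockA:
  fixes \<alpha> s t u :: complex and n :: nat and a b :: int
  assumes v: "valid n a b" and al: "\<alpha> \<noteq> 0" and w: "(s + t) / 2 \<notin> \<int>"
  defines "np \<equiv> nat ((int n + b - a) div 2)" and "nm \<equiv> nat ((int n - b + a) div 2)"
  shows "opprod (\<lambda>l g. smult (inverse (-\<alpha>)) (Op \<alpha> (\<alpha>*(- of_int b - t - u)) (\<alpha>*(u - of_nat l)) g)) k (psi \<alpha> s t n 0 a b)
    = (\<Sum>j\<le>k. smult (cb (of_int a + (s+t)/2) (u + of_nat np) (of_int b - of_nat np + (s+t)/2) (of_nat nm) (of_int b + (s+t)/2 + u + of_nat nm) (k-j) j)
          (psi \<alpha> s t n 0 (a + int j - int (k-j)) (b + int k)))"
proof -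
  define x where "x = of_int a + (s+t)/(2::complex)"
  define p1 where "p1 = u + of_nat np"
  define p2 where "p2 = of_int b - of_nat np + (s+t)/(2::complex)"
  define p3 where "p3 = (of_nat nm :: complex)"
  define p4 where "p4 = of_int b + (s+t)/2 + u + of_nat nm"
  define F where "F = (\<lambda>l g. smult (inverse (-\<alpha>)) (Op \<alpha> (\<alpha>*(- of_int b - t - u)) (\<alpha>*(u - of_nat l)) g))"
  define Q where "Q = (\<lambda>i j. psi \<alpha> s t n 0 (a + int j - int i) (b + int i + int j))"
  have hx: "\<forall>k::int. x + of_int k \<noteq> 0" unfolding x_def by (rule hx_gen[OF w])
  have enp: "2 * int np = int n + b - a" "2 * int nm = int n - b + a" using v unfolding valid_def np_def nm_def by auto
  have main: "opprod F k (Q 0 0) = (\<Sum>j\<le>k. smult (cb x p1 p2 p3 p4 (k-j) j) (Q (k-j) j))"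
  proof (rule block_gen)
    show "\<And>l f g. F l (f + g) = F l f + F l g" unfolding F_def by (simp add: Op_add smult_add_right)
    show "\<And>l c f. F l (smult c f) = smult c (F l f)" unfolding F_def by (simp add: Op_smult mult.commute)
    show "cb x p1 p2 p3 p4 0 0 = 1" by (rule cb_00[OF hx])
    show "\<And>j. cb x p1 p2 p3 p4 0 (Suc j) = cb x p1 p2 p3 p4 0 j * upc x p1 p2 0 j" by (rule cb_r1[OF hx])
    show "\<And>i. cb x p1 p2 p3 p4 (Suc i) 0 = cb x p1 p2 p3 p4 i 0 * dnc x p3 p4 i 0" by (rule cb_r2[OF hx])
    show "\<And>i j. cb x p1 p2 p3 p4 (Suc i) (Suc j) = cb x p1 p2 p3 p4 (Suc i) j * upc x p1 p2 (Suc i) j + cb x p1 p2 p3 p4 i (Suc j) * dnc x p3 p4 i (Suc j)"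
      by (rule cb_r3[OF hx])
    fix i j
    show "smult (cb x p1 p2 p3 p4 i j) (F (i + j) (Q i j)) =
          smult (cb x p1 p2 p3 p4 i j) (smult (upc x p1 p2 i j) (Q i (Suc j)) + smult (dnc x p3 p4 i j) (Q (Suc i) j))"
    proof (cases "nm < i")
      case True
      then show ?thesis unfolding p3_def by (simp add: cb_zero3)
    next
      case False
      define a' where "a' = a + int j - int i"
      define b' where "b' = b + int i + int j"
      have E1: "int n + b' - a' = 2 * (int np + int i)" using enp unfolding a'_def b'_def by simp
      have E2: "int n - b' + a' = 2 * (int nm - int i)" using enp unfolding a'_def b'_def by simp
      have vs: "valid n a' b'" unfolding valid_def E1 E2 using False by simp
      have bg: "\<alpha>*(- of_int b - t - u) + \<alpha>*(u - of_nat (i+j)) = \<alpha>*(- of_int b' - t)"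
        unfolding b'_def by (simp add: algebra_simps)
      have Np: "nat ((int n + b' - a') div 2) = np + i" unfolding E1 by simp
      have Nm: "nat ((int n - b' + a') div 2) = nm - i" unfolding E2 using False by simp
      have S: "F (i+j) (Q i j) =
        smult ((u - of_nat (i+j) + of_nat (np + i)) * (of_int b' + (s+t)/2 - of_nat (np + i)) / (of_int a' + (s+t)/2)) (psi \<alpha> s t n 0 (a'+1) (b'+1))
        + smult (of_nat (nm - i) * (of_int b' + (s+t)/2 + (u - of_nat (i+j)) + of_nat (nm - i)) / (of_int a' + (s+t)/2)) (psi \<alpha> s t n 0 (a'-1) (b'+1))"
        unfolding F_def Q_def a'_def[symmetric] b'_def[symmetric]
        using psi_stepA[OF vs al w bg] unfolding Np Nm .
      have Q1: "Q i (Suc j) = psi \<alpha> s t n 0 (a'+1) (b'+1)" unfolding Q_def a'_def b'_def by (simp add: algebra_simps)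
      have Q2: "Q (Suc i) j = psi \<alpha> s t n 0 (a'-1) (b'+1)" unfolding Q_def a'_def b'_def by (simp add: algebra_simps)
      have xa: "of_int a' + (s+t)/2 = x + of_nat j - of_nat i" unfolding a'_def x_def by simp
      have c1: "(u - of_nat (i+j) + of_nat (np + i)) * (of_int b' + (s+t)/2 - of_nat (np + i)) / (of_int a' + (s+t)/2) = upc x p1 p2 i j"
        unfolding upc_def xa p1_def p2_def b'_def by (simp add: algebra_simps)
      have c2: "of_nat (nm - i) * (of_int b' + (s+t)/2 + (u - of_nat (i+j)) + of_nat (nm - i)) / (of_int a' + (s+t)/2) = dnc x p3 p4 i j"
        unfolding dnc_def xa p3_def p4_def b'_def using False by (simp add: of_nat_diff algebra_simps)
      show ?thesis unfolding S Q1 Q2 c1 c2 ..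
    qed
  qed
  have Q00: "Q 0 0 = psi \<alpha> s t n 0 a b" by (simp add: Q_def)
  have "(\<Sum>j\<le>k. smult (cb x p1 p2 p3 p4 (k-j) j) (Q (k-j) j)) = (\<Sum>j\<le>k. smult (cb x p1 p2 p3 p4 (k-j) j) (psi \<alpha> s t n 0 (a + int j - int (k-j)) (b + int k)))"
    by (intro sum.cong refl) (simp add: Q_def of_nat_diff)
  with main have "opprod F k (psi \<alpha> s t n 0 a b) = (\<Sum>j\<le>k. smult (cb x p1 p2 p3 p4 (k-j) j) (psi \<alpha> s t n 0 (a + int j - int (k-j)) (b + int k)))"
    unfolding Q00 by simp
  then show ?thesis unfolding F_def x_def p1_def p2_def p3_def p4_def .
qed


lemma opprod_smult_pull:
  assumes "\<And>l c g. F l (smult c g) = smult c (F l g)"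
  shows "opprod F k (smult c g) = smult c (opprod F k g)"
  by (induction k) (simp_all add: assms)

lemma opprod_add:
  assumes "\<And>l f g. F l (f + g) = F l f + F l g"
  shows "opprod F k (f + g) = opprod F k f + opprod F k g"
  by (induction k) (simp_all add: assms)

lemma opprod_sum:
  fixes F :: "nat \<Rightarrow> complex poly \<Rightarrow> complex poly"
  assumes "\<And>l f g. F l (f + g) = F l f + F l g"
  shows "opprod F k (\<Sum>i\<in>A. g i) = (\<Sum>i\<in>A. opprod F k (g i))"
  by (rule lin_sum) (rule opprod_add[OF assms])

lemma opprod_scale:
  fixes F :: "nat \<Rightarrow> complex poly \<Rightarrow> complex poly"
  assumes "\<And>l c g. F l (smult c g) = smult c (F l g)"
  shows "opprod (\<lambda>l g. smult k (F l g)) n f = smult (k^n) (opprod F n f)"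
proof (induction n)
  case 0 then show ?case by simp
next
  case (Suc n) then show ?case by (simp add: assms mult.commute)
qed

lemma Op_lin: "Op \<alpha> \<beta> \<gamma> (f+g) = Op \<alpha> \<beta> \<gamma> f + Op \<alpha> \<beta> \<gamma> g" "Op \<alpha> \<beta> \<gamma> (smult c f) = smult c (Op \<alpha> \<beta> \<gamma> f)"
  by (rule Op_add, rule Op_smult)

lemma Lop_Op: "Lop \<alpha> s t m u b c f = smult (inverse ((-\<alpha>) ^ m))
   (opprod (\<lambda>l g. Op \<alpha> (\<alpha> * (- u + of_int (int m - b - c) / 2 - t)) (\<alpha> * (u - of_nat l)) g) (nat ((int m + (c - b)) div 2))
     (opprod (\<lambda>l' g. Op \<alpha> (\<alpha> * (- u + of_int (int m + b + c) / 2 + s)) (\<alpha> * (u - of_nat (nat ((int m + (c - b)) div 2)) - of_nat l')) g)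
        (nat ((int m - (c - b)) div 2)) f))"
  unfolding Lop_def Let_def Op_def by simp


lemma smult_sum_right: "smult (c::complex) (\<Sum>i\<in>A. f i) = (\<Sum>i\<in>A. smult c (f i))"
  by (rule lin_sum) (rule smult_add_right)

lemma lhs_expansion:
  fixes \<alpha> s t u :: complex and n m :: nat and a b c :: int
  assumes al: "\<alpha> \<noteq> 0" and w: "(s + t) / 2 \<notin> \<int>"
    and h1: "\<bar>a - b\<bar> \<le> int n" and h2: "(a - b + int n) mod 2 = 0"
    and h3: "\<bar>b - c\<bar> \<le> int m" and h4: "(b - c + int m) mod 2 = 0"
  defines "mp \<equiv> nat ((int m + (c - b)) div 2)" and "mm \<equiv> nat ((int m - (c - b)) div 2)"
    and "np \<equiv> nat ((int n + b - a) div 2)" and "nm \<equiv> nat ((int n - b + a) div 2)"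
    and "x \<equiv> of_int a + (s+t)/2"
  defines "aj \<equiv> (\<lambda>j. a + int j - int (mm - j))"
  defines "cbB \<equiv> (\<lambda>j. cb x (of_nat np) (of_int b - of_nat np + (s+t)/2 - (u - of_nat mp)) ((u - of_nat mp) + of_nat nm) (of_int b + of_nat nm + (s+t)/2) (mm-j) j)"
  defines "cbA \<equiv> (\<lambda>j j'. cb (of_int (aj j) + (s+t)/2) (u + of_nat (nat ((int n + (b - int mm) - aj j) div 2)))
            (of_int (b - int mm) - of_nat (nat ((int n + (b - int mm) - aj j) div 2)) + (s+t)/2)
            (of_nat (nat ((int n - (b - int mm) + aj j) div 2)))
            (of_int (b - int mm) + (s+t)/2 + u + of_nat (nat ((int n - (b - int mm) + aj j) div 2))) (mp - j') j')"
  shows "Lop \<alpha> s t m u b c (psi \<alpha> s t n 0 a b) =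
     (\<Sum>j\<le>mm. \<Sum>j'\<le>mp. smult (cbB j * cbA j j') (psi \<alpha> s t n 0 (aj j + int j' - int (mp - j')) c))"
proof -
  have v: "valid n a b" unfolding valid_def using h1 h2 by presburger
  have g1: "0 \<le> int m + (c - b)" "0 \<le> int m - (c - b)" using h3 by (auto simp: abs_le_iff)
  have g2: "int mp = (int m + (c - b)) div 2" "int mm = (int m - (c - b)) div 2" using g1 by (simp_all add: mp_def mm_def)
  have mpm1: "int mp + int mm = int m" unfolding g2 using h4 by presburger
  have mpm2: "int mm - int mp = b - c" unfolding g2 using h4 by presburger
  note mpm = mpm1 mpm2
  have mpmc: "2 * (of_nat mp :: complex) = of_int (int m + c - b)" "2 * (of_nat mm :: complex) = of_int (int m - c + b)"
  proof -
    have "2 * int mp = int m + c - b" "2 * int mm = int m - c + b" using mpm by linarith+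
    then show "2 * (of_nat mp :: complex) = of_int (int m + c - b)" "2 * (of_nat mm :: complex) = of_int (int m - c + b)"
      by (metis of_int_mult of_int_numeral of_int_of_nat_eq)+
  qed
  define k where "k = inverse (-\<alpha>)"
  define A where "A = (\<lambda>l g. Op \<alpha> (\<alpha> * (- u + of_int (int m - b - c) / 2 - t)) (\<alpha> * (u - of_nat l)) g)"
  define B where "B = (\<lambda>l' g. Op \<alpha> (\<alpha> * (- u + of_int (int m + b + c) / 2 + s)) (\<alpha> * (u - of_nat mp - of_nat l')) g)"
  have Asm: "\<And>l c g. A l (smult c g) = smult c (A l g)" unfolding A_def by (rule Op_smult)
  have Bsm: "\<And>l c g. B l (smult c g) = smult c (B l g)" unfolding B_def by (rule Op_smult)
  have Aadd: "\<And>l f g. A l (f + g) = A l f + A l g" unfolding A_def by (rule Op_add)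
  define A' where "A' = (\<lambda>l g. smult k (A l g))"
  define B' where "B' = (\<lambda>l g. smult k (B l g))"
  have A'add: "\<And>l f g. A' l (f + g) = A' l f + A' l g" unfolding A'_def by (simp add: Aadd smult_add_right)
  have A'sm: "\<And>l c g. A' l (smult c g) = smult c (A' l g)" unfolding A'_def by (simp add: Asm mult.commute)
  have L1: "Lop \<alpha> s t m u b c (psi \<alpha> s t n 0 a b) = opprod A' mp (opprod B' mm (psi \<alpha> s t n 0 a b))"
  proof -
    have mm': "m = mp + mm" using mpm by linarith
    have km: "inverse ((-\<alpha>) ^ m) = k^mp * k^mm"
      unfolding k_def power_add[symmetric] mm'[symmetric] by (metis power_inverse)
    show ?thesis
      unfolding Lop_Op A_def[symmetric] mp_def[symmetric] B_def[symmetric] mm_def[symmetric]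
      unfolding A'_def B'_def opprod_scale[OF Asm] opprod_scale[OF Bsm] opprod_smult_pull[OF Asm] km
      by simp
  qed
  have B'eq: "B' = (\<lambda>l g. smult (inverse (-\<alpha>)) (Op \<alpha> (\<alpha>*(of_int b + s - (u - of_nat mp))) (\<alpha>*((u - of_nat mp) - of_nat l)) g))"
  proof -
    have "- u + of_int (int m + b + c) / 2 + s = of_int b + s - (u - of_nat mp)"
      using mpmc(1) by (simp add: field_simps)
    then have e: "\<alpha> * (- u + of_int (int m + b + c) / 2 + s) = \<alpha>*(of_int b + s - (u - of_nat mp))" by simp
    show ?thesis unfolding B'_def B_def k_def e ..
  qed
  have L2: "opprod B' mm (psi \<alpha> s t n 0 a b) = (\<Sum>j\<le>mm. smult (cbB j) (psi \<alpha> s t n 0 (aj j) (b - int mm)))"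
    unfolding B'eq cbB_def aj_def x_def np_def nm_def using blockB[OF v al w, of "u - of_nat mp" mm] by simp
  have L3: "smult (cbB j) (opprod A' mp (psi \<alpha> s t n 0 (aj j) (b - int mm)))
     = (\<Sum>j'\<le>mp. smult (cbB j * cbA j j') (psi \<alpha> s t n 0 (aj j + int j' - int (mp - j')) c))" if jm: "j \<le> mm" for j
  proof (cases "np < j")
    case True
    then have "cbB j = 0" unfolding cbB_def by (simp add: cb_zero1)
    then show ?thesis by simp
  next
    case False
    have vj: "valid n (aj j) (b - int mm)"
    proof -
      have "int n + (b - int mm) - aj j = 2 * (int np - int j)" "int n - (b - int mm) + aj j = 2 * (int nm + int j)"
        using v jm unfolding valid_def np_def nm_def aj_def by auto
      then show ?thesis unfolding valid_def using False by simp
    qed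
    have A'eq: "A' = (\<lambda>l g. smult (inverse (-\<alpha>)) (Op \<alpha> (\<alpha>*(- of_int (b - int mm) - t - u)) (\<alpha>*(u - of_nat l)) g))"
    proof -
      have "- u + of_int (int m - b - c) / 2 - t = - of_int (b - int mm) - t - u"
        using mpmc(2) by (simp add: field_simps)
      then have e: "\<alpha> * (- u + of_int (int m - b - c) / 2 - t) = \<alpha>*(- of_int (b - int mm) - t - u)" by simp
      show ?thesis unfolding A'_def A_def k_def e ..
    qed
    have cc: "b - int mm + int mp = c" using mpm by linarith
    have "opprod A' mp (psi \<alpha> s t n 0 (aj j) (b - int mm)) = (\<Sum>j'\<le>mp. smult (cbA j j') (psi \<alpha> s t n 0 (aj j + int j' - int (mp - j')) c))"
      unfolding A'eq cbA_def using blockA[OF vj al w, of u mp] unfolding cc .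
    then show ?thesis by (simp add: smult_sum_right smult_smult)
  qed
  show ?thesis unfolding L1 L2 opprod_sum[OF A'add] opprod_smult_pull[OF A'sm]
    by (intro sum.cong refl) (simp add: L3)
qed


definition WS :: "complex \<Rightarrow> complex \<Rightarrow> nat \<Rightarrow> nat \<Rightarrow> int \<Rightarrow> int \<Rightarrow> int \<Rightarrow> int \<Rightarrow> complex \<Rightarrow> int \<Rightarrow> complex" where
  "WS s t n m a b b' c u \<Sigma> =
    (let w = (s + t) / 2;
         \<nu> = a - b; \<mu> = b - c; \<mu>' = b' - a;
         mp = nat ((int m - \<mu>) div 2);
         mm = nat ((int m + \<mu>) div 2);
         x = of_int a + w
     in (let kp = nat ((int mm + \<Sigma>) div 2);
               km = nat ((int mm - \<Sigma>) div 2);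
               rp = nat ((int mp + (\<mu>' - \<Sigma>)) div 2);
               rm = nat ((int mp - (\<mu>' - \<Sigma>)) div 2);
               \<theta>1 = of_int (int n - \<nu>) / 2;
               \<theta>2 = - u + of_int c + of_nat mm - of_int (int n - \<nu>) / 2 + w;
               \<theta>3 = u - of_nat mp + of_int (int n + \<nu>) / 2;
               \<theta>4 = of_int c + of_int \<mu> + of_int (int n + \<nu>) / 2 + w;
               \<theta>5 = u + of_int (int n - \<nu> - \<Sigma> - int mm) / 2;
               \<theta>6 = of_int c + of_int \<mu> - of_int (int n - \<nu> - \<Sigma> + int mm) / 2 + w;
               \<theta>7 = of_int (int n + \<nu> + \<Sigma> + int mm) / 2;
               \<theta>8 = u + of_int c + of_int \<mu> + of_int (int n + \<nu> + \<Sigma> - int mm) / 2 + w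
           in ((x + of_int \<mu>') * of_nat (mm choose kp) * of_nat (mp choose rp)
                * falling \<theta>1 kp * rising \<theta>2 kp * falling \<theta>3 km * falling \<theta>4 km
                * falling \<theta>5 rp * rising \<theta>6 rp * falling \<theta>7 rm * falling \<theta>8 rm)
              / (x * rising (x + 1) kp * falling (x - 1) km
                 * rising (x + of_int \<Sigma> + 1) rp * falling (x + of_int \<Sigma> - 1) rm)))"

lemma Wcoef_WS: "Wcoef s t n m a b b' c u =
   (\<Sum>\<Sigma>\<in>{\<Sigma>::int. - int (nat ((int m + (b - c)) div 2)) \<le> \<Sigma> \<and> \<Sigma> \<le> int (nat ((int m + (b - c)) div 2))
        \<and> (\<Sigma> + int (nat ((int m + (b - c)) div 2))) mod 2 = 0
        \<and> \<bar>(b' - a) - \<Sigma>\<bar> \<le> int (nat ((int m - (b - c)) div 2))}. WS s t n m a b b' c u \<Sigma>)"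
  unfolding Wcoef_def WS_def Let_def ..

lemma cb_prod:
  assumes hx: "\<forall>k::int. x + of_int k \<noteq> (0::complex)" and y: "y = x + of_nat j - of_nat i"
  shows "cb x P1 P2 P3 P4 i j * cb y R1 R2 R3 R4 i' j' =
    ((y + of_nat j' - of_nat i') * of_nat ((i+j) choose j) * of_nat ((i'+j') choose j')
      * falling P1 j * rising P2 j * falling P3 i * falling P4 i
      * falling R1 j' * rising R2 j' * falling R3 i' * falling R4 i')
    / (x * rising (x+1) j * falling (x-1) i * rising (y+1) j' * falling (y-1) i')"
proof -
  have hy: "\<forall>k::int. y + of_int k \<noteq> 0"
  proof
    fix k :: int
    have "y + of_int k = x + of_int (int j - int i + k)" unfolding y by simp
    then show "y + of_int k \<noteq> 0" using hx by metis
  qed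
  have x0: "x \<noteq> 0" using hx[rule_format, of 0] by simp
  have y0: "y \<noteq> 0" using hy[rule_format, of 0] by simp
  have R1: "rising (x+1) j \<noteq> 0" "falling (x-1) i \<noteq> 0" using rising_nz[OF hx] falling_nz[OF hx] by auto
  have R2: "rising (y+1) j' \<noteq> 0" "falling (y-1) i' \<noteq> 0" using rising_nz[OF hy] falling_nz[OF hy] by auto
  have yy: "x + of_nat j - of_nat i = y" using y by simp
  show ?thesis unfolding cb_def yy using x0 y0 R1 R2 by (simp add: field_simps)
qed


lemma WS_eval:
  assumes e1: "nat ((int m + (b - c)) div 2) = MM" and e2: "nat ((int m - (b - c)) div 2) = MP"
    and e3: "nat ((int MM + \<Sigma>) div 2) = KP" and e4: "nat ((int MM - \<Sigma>) div 2) = KM"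
    and e5: "nat ((int MP + ((b' - a) - \<Sigma>)) div 2) = RP" and e6: "nat ((int MP - ((b' - a) - \<Sigma>)) div 2) = RM"
    and t1: "of_int (int n - (a - b)) / 2 = T1"
    and t2: "- u + of_int c + of_nat MM - T1 + (s + t) / 2 = T2"
    and t3: "u - of_nat MP + of_int (int n + (a - b)) / 2 = T3"
    and t4: "of_int c + of_int (b - c) + of_int (int n + (a - b)) / 2 + (s + t) / 2 = T4"
    and t5: "u + of_int (int n - (a - b) - \<Sigma> - int MM) / 2 = T5"
    and t6: "of_int c + of_int (b - c) - of_int (int n - (a - b) - \<Sigma> + int MM) / 2 + (s + t) / 2 = T6"
    and t7: "of_int (int n + (a - b) + \<Sigma> + int MM) / 2 = T7"
    and t8: "u + of_int c + of_int (b - c) + of_int (int n + (a - b) + \<Sigma> - int MM) / 2 + (s + t) / 2 = T8"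
    and nu: "of_int a + (s + t) / 2 + of_int (b' - a) = NUM"
    and yy: "of_int a + (s + t) / 2 + of_int \<Sigma> = Y"
  shows "WS s t n m a b b' c u \<Sigma> =
     (NUM * of_nat (MM choose KP) * of_nat (MP choose RP)
                * falling T1 KP * rising T2 KP * falling T3 KM * falling T4 KM
                * falling T5 RP * rising T6 RP * falling T7 RM * falling T8 RM)
              / ((of_int a + (s + t) / 2) * rising (of_int a + (s + t) / 2 + 1) KP * falling (of_int a + (s + t) / 2 - 1) KM
                 * rising (Y + 1) RP * falling (Y - 1) RM)"
  unfolding WS_def Let_def e1 e2 e3 e4 e5 e6 t1 t2 t3 t4 t5 t6 t7 t8 nu yy ..

lemma summand:
  fixes \<alpha> s t u :: complex and n m :: nat and a b c :: int
  assumes w: "(s + t) / 2 \<notin> \<int>"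
    and h1: "\<bar>a - b\<bar> \<le> int n" and h2: "(a - b + int n) mod 2 = 0"
    and h3: "\<bar>b - c\<bar> \<le> int m" and h4: "(b - c + int m) mod 2 = 0"
  defines "mp \<equiv> nat ((int m + (c - b)) div 2)" and "mm \<equiv> nat ((int m - (c - b)) div 2)"
    and "np \<equiv> nat ((int n + b - a) div 2)" and "nm \<equiv> nat ((int n - b + a) div 2)"
    and "x \<equiv> of_int a + (s+t)/2"
  defines "aj \<equiv> (\<lambda>j. a + int j - int (mm - j))"
  defines "cbB \<equiv> (\<lambda>j. cb x (of_nat np) (of_int b - of_nat np + (s+t)/2 - (u - of_nat mp)) ((u - of_nat mp) + of_nat nm) (of_int b + of_nat nm + (s+t)/2) (mm-j) j)"
  defines "cbA \<equiv> (\<lambda>j j'. cb (of_int (aj j) + (s+t)/2) (u + of_nat (nat ((int n + (b - int mm) - aj j) div 2)))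
            (of_int (b - int mm) - of_nat (nat ((int n + (b - int mm) - aj j) div 2)) + (s+t)/2)
            (of_nat (nat ((int n - (b - int mm) + aj j) div 2)))
            (of_int (b - int mm) + (s+t)/2 + u + of_nat (nat ((int n - (b - int mm) + aj j) div 2))) (mp - j') j')"
  assumes jm: "j \<le> mm" and jp: "j' \<le> mp"
  shows "WS s t n m a b (aj j + int j' - int (mp - j')) c u (int j - int (mm - j)) = cbB j * cbA j j'"
proof -
  have v: "valid n a b" unfolding valid_def using h1 h2 by presburger
  have g1: "0 \<le> int m + (c - b)" "0 \<le> int m - (c - b)" using h3 by (auto simp: abs_le_iff)
  have g2: "int mp = (int m + (c - b)) div 2" "int mm = (int m - (c - b)) div 2" using g1 by (simp_all add: mp_def mm_def)
  have mpm1: "int mp + int mm = int m" unfolding g2 using h4 by presburger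
  have mpm2: "int mm - int mp = b - c" unfolding g2 using h4 by presburger
  have enp: "2 * int np = int n + b - a" "2 * int nm = int n - b + a" using v unfolding valid_def np_def nm_def by auto
  define b' where "b' = aj j + int j' - int (mp - j')"
  define \<Sigma> where "\<Sigma> = int j - int (mm - j)"
  have jm': "int (mm - j) = int mm - int j" using jm by simp
  have jp': "int (mp - j') = int mp - int j'" using jp by simp
  have e1: "nat ((int m + (b - c)) div 2) = mm" unfolding mm_def by (simp add: algebra_simps)
  have e2: "nat ((int m - (b - c)) div 2) = mp" unfolding mp_def by (simp add: algebra_simps)
  have e3: "nat ((int mm + \<Sigma>) div 2) = j" unfolding \<Sigma>_def jm' by simp
  have e4: "nat ((int mm - \<Sigma>) div 2) = mm - j" unfolding \<Sigma>_def jm' by simp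
  have e5: "nat ((int mp + ((b' - a) - \<Sigma>)) div 2) = j'" unfolding \<Sigma>_def b'_def aj_def jm' jp' by simp
  have e6: "nat ((int mp - ((b' - a) - \<Sigma>)) div 2) = mp - j'" unfolding \<Sigma>_def b'_def aj_def jm' jp' by simp
  have t1: "of_int (int n - (a - b)) / 2 = (of_nat np :: complex)"
  proof -
    have "int n - (a - b) = 2 * int np" using enp by simp
    then show ?thesis by simp
  qed
  have cbBz: "np < j \<Longrightarrow> cbB j = 0" unfolding cbB_def by (simp add: cb_zero1)
  have hx: "\<forall>k::int. x + of_int k \<noteq> 0" unfolding x_def by (rule hx_gen[OF w])
  show ?thesis
  proof (cases "np < j")
    case True
    have "WS s t n m a b b' c u \<Sigma> =
     ((of_int a + (s + t) / 2 + of_int (b' - a)) * of_nat (mm choose j) * of_nat (mp choose j')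
                * falling (of_nat np) j * rising (- u + of_int c + of_nat mm - of_nat np + (s + t) / 2) j
                * falling (u - of_nat mp + of_int (int n + (a - b)) / 2) (mm - j)
                * falling (of_int c + of_int (b - c) + of_int (int n + (a - b)) / 2 + (s + t) / 2) (mm - j)
                * falling (u + of_int (int n - (a - b) - \<Sigma> - int mm) / 2) j'
                * rising (of_int c + of_int (b - c) - of_int (int n - (a - b) - \<Sigma> + int mm) / 2 + (s + t) / 2) j'
                * falling (of_int (int n + (a - b) + \<Sigma> + int mm) / 2) (mp - j')
                * falling (u + of_int c + of_int (b - c) + of_int (int n + (a - b) + \<Sigma> - int mm) / 2 + (s + t) / 2) (mp - j'))
              / ((of_int a + (s + t) / 2) * rising (of_int a + (s + t) / 2 + 1) j * falling (of_int a + (s + t) / 2 - 1) (mm - j)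
                 * rising ((of_int a + (s + t) / 2 + of_int \<Sigma>) + 1) j' * falling ((of_int a + (s + t) / 2 + of_int \<Sigma>) - 1) (mp - j'))"
      by (rule WS_eval[OF e1 e2 e3 e4 e5 e6 t1]) (rule refl)+
    also have "\<dots> = 0" using True by (simp add: falling_nat_zero)
    finally show ?thesis using cbBz[OF True] unfolding b'_def \<Sigma>_def by simp
  next
    case False
    define npA where "npA = nat ((int n + (b - int mm) - aj j) div 2)"
    define nmA where "nmA = nat ((int n - (b - int mm) + aj j) div 2)"
    have npA: "int npA = int np - int j" unfolding npA_def aj_def jm' using enp False by simp
    have nmA: "int nmA = int nm + int j" unfolding nmA_def aj_def jm' using enp by simp
    have npAc: "(of_nat npA :: complex) = of_nat np - of_nat j"
      using arg_cong[OF npA, of "of_int :: int \<Rightarrow> complex"] by simp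
    have nmAc: "(of_nat nmA :: complex) = of_nat nm + of_nat j"
      using arg_cong[OF nmA, of "of_int :: int \<Rightarrow> complex"] by simp
    have enpc: "2 * (of_nat np :: complex) = of_nat n + of_int b - of_int a" "2 * (of_nat nm :: complex) = of_nat n - of_int b + of_int a"
      using arg_cong[OF enp(1), of "of_int :: int \<Rightarrow> complex"] arg_cong[OF enp(2), of "of_int :: int \<Rightarrow> complex"] by simp_all
    have enps: "(of_nat np :: complex) = (of_nat n + of_int b - of_int a)/2" "(of_nat nm :: complex) = (of_nat n - of_int b + of_int a)/2"
      using enpc by (simp_all add: field_simps)
    have mpmc: "(of_nat mm :: complex) - of_nat mp = of_int b - of_int c"
      using arg_cong[OF mpm2, of "of_int :: int \<Rightarrow> complex"] by simp
    have jmc: "(of_nat (mm - j) :: complex) = of_nat mm - of_nat j" using jm by (simp add: of_nat_diff)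
    have jpc: "(of_nat (mp - j') :: complex) = of_nat mp - of_nat j'" using jp by (simp add: of_nat_diff)
    define y where "y = of_int (aj j) + (s+t)/(2::complex)"
    have yx: "y = x + of_nat j - of_nat (mm - j)" unfolding y_def x_def aj_def by simp
    have "WS s t n m a b b' c u \<Sigma> =
     ((y + of_nat j' - of_nat (mp - j')) * of_nat (mm choose j) * of_nat (mp choose j')
                * falling (of_nat np) j * rising (of_int b - of_nat np + (s+t)/2 - (u - of_nat mp)) j
                * falling ((u - of_nat mp) + of_nat nm) (mm - j)
                * falling (of_int b + of_nat nm + (s+t)/2) (mm - j)
                * falling (u + of_nat npA) j'
                * rising (of_int (b - int mm) - of_nat npA + (s+t)/2) j'
                * falling (of_nat nmA) (mp - j')
                * falling (of_int (b - int mm) + (s+t)/2 + u + of_nat nmA) (mp - j'))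
              / (x * rising (x + 1) j * falling (x - 1) (mm - j)
                 * rising (y + 1) j' * falling (y - 1) (mp - j'))"
      unfolding x_def
    proof (rule WS_eval[OF e1 e2 e3 e4 e5 e6 t1])
      show "- u + of_int c + of_nat mm - of_nat np + (s + t) / 2 = of_int b - of_nat np + (s+t)/2 - (u - of_nat mp)"
        using mpmc by (simp add: algebra_simps)
      show "u - of_nat mp + of_int (int n + (a - b)) / 2 = (u - of_nat mp) + of_nat nm"
        by (simp add: enps field_simps)
      show "of_int c + of_int (b - c) + of_int (int n + (a - b)) / 2 + (s + t) / 2 = of_int b + of_nat nm + (s+t)/2"
        by (simp add: enps field_simps)
      show "u + of_int (int n - (a - b) - \<Sigma> - int mm) / 2 = u + of_nat npA"
        unfolding npAc \<Sigma>_def jm' by (simp add: enps field_simps)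
      show "of_int c + of_int (b - c) - of_int (int n - (a - b) - \<Sigma> + int mm) / 2 + (s + t) / 2 = of_int (b - int mm) - of_nat npA + (s+t)/2"
        unfolding npAc \<Sigma>_def jm' by (simp add: enps field_simps)
      show "of_int (int n + (a - b) + \<Sigma> + int mm) / 2 = (of_nat nmA :: complex)"
        unfolding nmAc \<Sigma>_def jm' by (simp add: enps field_simps)
      show "u + of_int c + of_int (b - c) + of_int (int n + (a - b) + \<Sigma> - int mm) / 2 + (s + t) / 2 = of_int (b - int mm) + (s+t)/2 + u + of_nat nmA"
        unfolding nmAc \<Sigma>_def jm' by (simp add: enps field_simps)
      show "of_int a + (s + t) / 2 + of_int (b' - a) = y + of_nat j' - of_nat (mp - j')"
        unfolding y_def b'_def by simp
      show "of_int a + (s + t) / 2 + of_int \<Sigma> = y"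
        unfolding y_def \<Sigma>_def aj_def by simp
    qed
    also have "\<dots> = cbB j * cbA j j'"
    proof -
      have "cbB j * cbA j j' = cb x (of_nat np) (of_int b - of_nat np + (s+t)/2 - (u - of_nat mp)) ((u - of_nat mp) + of_nat nm) (of_int b + of_nat nm + (s+t)/2) (mm-j) j
          * cb y (u + of_nat npA) (of_int (b - int mm) - of_nat npA + (s+t)/2) (of_nat nmA) (of_int (b - int mm) + (s+t)/2 + u + of_nat nmA) (mp - j') j'"
        unfolding cbB_def cbA_def y_def npA_def nmA_def ..
      then show ?thesis unfolding cb_prod[OF hx yx] using jm jp by simp
    qed
    finally show ?thesis unfolding b'_def \<Sigma>_def .
  qed
qed


lemma part1:
  fixes \<alpha> s t u :: complex and n m :: nat and a b c :: int
  assumes al: "\<alpha> \<noteq> 0" and w: "(s + t) / 2 \<notin> \<int>"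
    and h1: "\<bar>a - b\<bar> \<le> int n" and h2: "(a - b + int n) mod 2 = 0"
    and h3: "\<bar>b - c\<bar> \<le> int m" and h4: "(b - c + int m) mod 2 = 0"
  shows "Lop \<alpha> s t m u b c (psi \<alpha> s t n 0 a b) =
           (\<Sum>b'\<in>{b'. \<bar>b' - a\<bar> \<le> int m \<and> (b' - a + int m) mod 2 = 0}.
              smult (Wcoef s t n m a b b' c u) (psi \<alpha> s t n 0 b' c))"
proof -
  define mp where "mp = nat ((int m + (c - b)) div 2)"
  define mm where "mm = nat ((int m - (c - b)) div 2)"
  define np where "np = nat ((int n + b - a) div 2)"
  define nm where "nm = nat ((int n - b + a) div 2)"
  define x where "x = of_int a + (s+t)/(2::complex)"
  define aj where "aj = (\<lambda>j. a + int j - int (mm - j))"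
  define cbB where "cbB = (\<lambda>j. cb x (of_nat np) (of_int b - of_nat np + (s+t)/2 - (u - of_nat mp)) ((u - of_nat mp) + of_nat nm) (of_int b + of_nat nm + (s+t)/2) (mm-j) j)"
  define cbA where "cbA = (\<lambda>j j'. cb (of_int (aj j) + (s+t)/2) (u + of_nat (nat ((int n + (b - int mm) - aj j) div 2)))
            (of_int (b - int mm) - of_nat (nat ((int n + (b - int mm) - aj j) div 2)) + (s+t)/2)
            (of_nat (nat ((int n - (b - int mm) + aj j) div 2)))
            (of_int (b - int mm) + (s+t)/2 + u + of_nat (nat ((int n - (b - int mm) + aj j) div 2))) (mp - j') j')"
  note LHS = lhs_expansion[OF al w h1 h2 h3 h4, of u, folded mp_def mm_def np_def nm_def x_def, folded aj_def, folded cbB_def cbA_def]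
  note SUM = summand[OF w h1 h2 h3 h4, of _ _ u, folded mp_def mm_def np_def nm_def x_def, folded aj_def, folded cbB_def cbA_def]
  have g1: "0 \<le> int m + (c - b)" "0 \<le> int m - (c - b)" using h3 by (auto simp: abs_le_iff)
  have g2: "int mp = (int m + (c - b)) div 2" "int mm = (int m - (c - b)) div 2" using g1 by (simp_all add: mp_def mm_def)
  have mpm1: "int mp + int mm = int m" unfolding g2 using h4 by presburger
  have mpm2: "int mm - int mp = b - c" unfolding g2 using h4 by presburger
  have e1: "nat ((int m + (b - c)) div 2) = mm" unfolding mm_def by (simp add: algebra_simps)
  have e2: "nat ((int m - (b - c)) div 2) = mp" unfolding mp_def by (simp add: algebra_simps)
  define M where "M = {b'. \<bar>b' - a\<bar> \<le> int m \<and> (b' - a + int m) mod 2 = 0}"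
  define S where "S = (\<lambda>b'. {\<Sigma>::int. - int mm \<le> \<Sigma> \<and> \<Sigma> \<le> int mm \<and> (\<Sigma> + int mm) mod 2 = 0 \<and> \<bar>(b' - a) - \<Sigma>\<bar> \<le> int mp})"
  have finM: "finite M" unfolding M_def
    by (rule finite_subset[of _ "{a - int m .. a + int m}"]) (auto simp: abs_le_iff)
  have finS: "finite (S b')" for b' unfolding S_def
    by (rule finite_subset[of _ "{- int mm .. int mm}"]) auto
  have W: "Wcoef s t n m a b b' c u = (\<Sum>\<Sigma>\<in>S b'. WS s t n m a b b' c u \<Sigma>)" for b'
    unfolding Wcoef_WS e1 e2 S_def ..
  have "(\<Sum>b'\<in>M. smult (Wcoef s t n m a b b' c u) (psi \<alpha> s t n 0 b' c))
      = (\<Sum>b'\<in>M. \<Sum>\<Sigma>\<in>S b'. smult (WS s t n m a b b' c u \<Sigma>) (psi \<alpha> s t n 0 b' c))"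
    unfolding W smult_sum ..
  also have "\<dots> = (\<Sum>(b',\<Sigma>)\<in>Sigma M S. smult (WS s t n m a b b' c u \<Sigma>) (psi \<alpha> s t n 0 b' c))"
    by (rule sum.Sigma[OF finM]) (simp add: finS)
  also have "\<dots> = (\<Sum>(j,j')\<in>{..mm} \<times> {..mp}. smult (cbB j * cbA j j') (psi \<alpha> s t n 0 (aj j + int j' - int (mp - j')) c))"
  proof (rule sum.reindex_bij_witness[where i = "\<lambda>(j,j'). (aj j + int j' - int (mp - j'), int j - int (mm - j))"
                                          and j = "\<lambda>(b',\<Sigma>). (nat ((int mm + \<Sigma>) div 2), nat ((int mp + (b' - a - \<Sigma>)) div 2))"])
    fix p assume p: "p \<in> Sigma M S"
    then obtain b' \<Sigma> where pp: "p = (b', \<Sigma>)" "b' \<in> M" "\<Sigma> \<in> S b'" by auto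
    define J where "J = nat ((int mm + \<Sigma>) div 2)"
    define J' where "J' = nat ((int mp + (b' - a - \<Sigma>)) div 2)"
    have c1: "\<bar>b' - a\<bar> \<le> int m" "(b' - a + int m) mod 2 = 0" using pp(2) unfolding M_def by auto
    have c2: "- int mm \<le> \<Sigma>" "\<Sigma> \<le> int mm" "(\<Sigma> + int mm) mod 2 = 0" "\<bar>(b' - a) - \<Sigma>\<bar> \<le> int mp"
      using pp(3) unfolding S_def by auto
    have J0: "int J = (int mm + \<Sigma>) div 2" unfolding J_def using c2 by simp
    have J: "2 * int J = int mm + \<Sigma>" unfolding J0 using c2(3) by presburger
    have nn: "0 \<le> int mp + (b' - a - \<Sigma>)" using c2(4) by (simp add: abs_le_iff)
    have J'0: "int J' = (int mp + (b' - a - \<Sigma>)) div 2" unfolding J'_def using nn by simp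
    have J': "2 * int J' = int mp + (b' - a - \<Sigma>)" unfolding J'0 using c1(2) c2(3) mpm1 by presburger
    have Jm: "J \<le> mm" using J c2 by linarith
    have Jp: "J' \<le> mp" using J' c2 by (simp add: abs_le_iff)
    have i1: "int (mm - J) = int mm - int J" "int (mp - J') = int mp - int J'" using Jm Jp by simp_all
    have inv: "(aj J + int J' - int (mp - J'), int J - int (mm - J)) = (b', \<Sigma>)"
      unfolding aj_def i1 using J J' by simp
    show "(\<lambda>(j,j'). (aj j + int j' - int (mp - j'), int j - int (mm - j))) ((\<lambda>(b',\<Sigma>). (nat ((int mm + \<Sigma>) div 2), nat ((int mp + (b' - a - \<Sigma>)) div 2))) p) = p"
      unfolding pp using inv by (simp add: J_def J'_def)
    show "(\<lambda>(b',\<Sigma>). (nat ((int mm + \<Sigma>) div 2), nat ((int mp + (b' - a - \<Sigma>)) div 2))) p \<in> {..mm} \<times> {..mp}"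
      unfolding pp using Jm Jp by (simp add: J_def J'_def)
    show "(\<lambda>(j,j'). smult (cbB j * cbA j j') (psi \<alpha> s t n 0 (aj j + int j' - int (mp - j')) c))
            ((\<lambda>(b',\<Sigma>). (nat ((int mm + \<Sigma>) div 2), nat ((int mp + (b' - a - \<Sigma>)) div 2))) p)
          = (\<lambda>(b',\<Sigma>). smult (WS s t n m a b b' c u \<Sigma>) (psi \<alpha> s t n 0 b' c)) p"
    proof -
      have bb: "b' = aj J + int J' - int (mp - J')" "\<Sigma> = int J - int (mm - J)" using inv by auto
      have "WS s t n m a b b' c u \<Sigma> = cbB J * cbA J J'"
        unfolding bb using SUM[OF Jm Jp] by (simp add: cbB_def cbA_def aj_def)
      then show ?thesis unfolding pp using inv by (simp add: J_def[symmetric] J'_def[symmetric])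
    qed
  next
    fix q assume q: "q \<in> {..mm} \<times> {..mp}"
    then obtain j j' where qq: "q = (j, j')" "j \<le> mm" "j' \<le> mp" by auto
    have i1: "int (mm - j) = int mm - int j" "int (mp - j') = int mp - int j'" using qq by simp_all
    show "(\<lambda>(b',\<Sigma>). (nat ((int mm + \<Sigma>) div 2), nat ((int mp + (b' - a - \<Sigma>)) div 2)))
           ((\<lambda>(j,j'). (aj j + int j' - int (mp - j'), int j - int (mm - j))) q) = q"
      unfolding qq by (simp add: aj_def i1)
    have "aj j + int j' - int (mp - j') \<in> M" unfolding M_def aj_def i1 using qq mpm1 by (simp add: abs_le_iff; presburger?)
    moreover have "int j - int (mm - j) \<in> S (aj j + int j' - int (mp - j'))" unfolding S_def aj_def i1 using qq
      by (simp add: abs_le_iff; presburger?)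
    ultimately show "(\<lambda>(j,j'). (aj j + int j' - int (mp - j'), int j - int (mm - j))) q \<in> Sigma M S"
      unfolding qq by simp
  qed
  also have "\<dots> = (\<Sum>j\<le>mm. \<Sum>j'\<le>mp. smult (cbB j * cbA j j') (psi \<alpha> s t n 0 (aj j + int j' - int (mp - j')) c))"
    by (rule sum.cartesian_product[symmetric])
  finally have R: "(\<Sum>b'\<in>M. smult (Wcoef s t n m a b b' c u) (psi \<alpha> s t n 0 b' c)) =
     (\<Sum>j\<le>mm. \<Sum>j'\<le>mp. smult (cbB j * cbA j j') (psi \<alpha> s t n 0 (aj j + int j' - int (mp - j')) c))" .
  from R show ?thesis unfolding LHS M_def cbB_def cbA_def aj_def by (rule sym)
qed


lemma poly_Pp: "poly (Pp \<alpha> c0 N) z = (\<Prod>i<N. z - \<alpha>*(c0 + 2*of_nat i))"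
  unfolding Pp_def by (simp add: poly_prod)

lemma psi_j:
  assumes "j \<le> n"
  shows "psi \<alpha> s t n 0 (c - int n + 2 * int j) c = smult ((-1)^n) (Pp \<alpha> (1 - of_int c - t) (n - j) * Pp \<alpha> (of_int c + 1 + s) j)"
proof -
  have v: "valid n (c - int n + 2 * int j) c" unfolding valid_def using assms by simp
  have e1: "nat ((int n + c - (c - int n + 2 * int j)) div 2) = n - j" using assms by simp
  have e2: "nat ((int n - c + (c - int n + 2 * int j)) div 2) = j" by simp
  show ?thesis using psi_repr[OF v, of \<alpha> s t] unfolding e1 e2 .
qed

lemma prod_nz: "(\<And>i. i \<in> A \<Longrightarrow> f i \<noteq> (0::complex)) \<Longrightarrow> finite A \<Longrightarrow> prod f A \<noteq> 0" by simp

lemma indep_nat: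
  fixes G :: "nat \<Rightarrow> complex"
  assumes al: "\<alpha> \<noteq> 0" and w: "(s + t) / 2 \<notin> \<int>"
    and S: "(\<Sum>j\<le>n. smult (G j) (psi \<alpha> s t n 0 (c - int n + 2 * int j) c)) = 0"
  shows "j0 \<le> n \<Longrightarrow> G j0 = 0"
proof (induction "n - j0" arbitrary: j0 rule: less_induct)
  case less
  define z where "z = \<alpha>*(1 - of_int c - t + 2*of_nat(n - j0))"
  define V where "V = (\<lambda>j. poly (psi \<alpha> s t n 0 (c - int n + 2 * int j) c) z)"
  have P0: "(\<Sum>j\<le>n. G j * V j) = 0"
    using arg_cong[OF S, of "\<lambda>p. poly p z"] unfolding V_def by (simp add: poly_sum)
  have Vz: "V j = 0" if "j < j0" for j
  proof -
    have jn: "j \<le> n" using that less.prems by simp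
    have "poly (Pp \<alpha> (1 - of_int c - t) (n - j)) z = 0"
      unfolding poly_Pp z_def
      by (rule prod_zero) (use that less.prems in \<open>auto intro!: bexI[of _ "n - j0"]\<close>)
    then show ?thesis unfolding V_def psi_j[OF jn] by simp
  qed
  have Gz: "G j = 0" if "j0 < j" "j \<le> n" for j
    using less.hyps[of j] that less.prems by simp
  have Vnz: "V j0 \<noteq> 0"
  proof -
    have A: "poly (Pp \<alpha> (1 - of_int c - t) (n - j0)) z \<noteq> 0"
      unfolding poly_Pp z_def
    proof (rule prod_nz)
      fix i assume "i \<in> {..<n - j0}"
      then have "i < n - j0" by simp
      then have "(of_nat (n - j0) :: complex) - of_nat i \<noteq> 0" by (metis less_irrefl of_nat_eq_iff right_minus_eq)
      then show "\<alpha> * (1 - of_int c - t + 2 * of_nat (n - j0)) - \<alpha> * (1 - of_int c - t + 2 * of_nat i) \<noteq> 0"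
        using al by (simp add: algebra_simps)
    qed simp
    have B: "poly (Pp \<alpha> (of_int c + 1 + s) j0) z \<noteq> 0"
      unfolding poly_Pp z_def
    proof (rule prod_nz)
      fix i assume "i \<in> {..<j0}"
      have ne: "of_int (int i - int (n - j0) + c) + (s + t) / 2 \<noteq> (0::complex)" by (rule w_nonint[OF w])
      have "\<alpha> * (1 - of_int c - t + 2 * of_nat (n - j0)) - \<alpha> * (of_int c + 1 + s + 2 * of_nat i)
          = -2 * \<alpha> * (of_int (int i - int (n - j0) + c) + (s + t) / 2)" by (simp add: field_simps)
      then show "\<alpha> * (1 - of_int c - t + 2 * of_nat (n - j0)) - \<alpha> * (of_int c + 1 + s + 2 * of_nat i) \<noteq> 0"
        using al ne by simp
    qed simp
    show ?thesis unfolding V_def psi_j[OF less.prems] using A B by simp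
  qed
  have "(\<Sum>j\<le>n. G j * V j) = G j0 * V j0 + (\<Sum>j\<in>{..n} - {j0}. G j * V j)"
    by (rule sum.remove) (use less.prems in auto)
  also have "(\<Sum>j\<in>{..n} - {j0}. G j * V j) = 0"
  proof (rule sum.neutral, intro ballI)
    fix j assume "j \<in> {..n} - {j0}"
    then have "j < j0 \<or> (j0 < j \<and> j \<le> n)" by auto
    then show "G j * V j = 0" using Vz Gz by auto
  qed
  finally have "G j0 * V j0 = 0" using P0 by simp
  then show ?case using Vnz by simp
qed


lemma indep:
  assumes al: "\<alpha> \<noteq> 0" and w: "(s + t) / 2 \<notin> \<int>"
  shows "\<forall>g :: int \<Rightarrow> complex.
          (\<Sum>b'\<in>{b'. \<bar>b' - c\<bar> \<le> int n \<and> (b' - c + int n) mod 2 = 0}.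
              smult (g b') (psi \<alpha> s t n 0 b' c)) = 0
          \<longrightarrow> (\<forall>b'\<in>{b'. \<bar>b' - c\<bar> \<le> int n \<and> (b' - c + int n) mod 2 = 0}. g b' = 0)"
proof (intro allI impI ballI)
  fix g :: "int \<Rightarrow> complex" and b'
  define N where "N = {b'. \<bar>b' - c\<bar> \<le> int n \<and> (b' - c + int n) mod 2 = 0}"
  assume S0: "(\<Sum>b'\<in>{b'. \<bar>b' - c\<bar> \<le> int n \<and> (b' - c + int n) mod 2 = 0}. smult (g b') (psi \<alpha> s t n 0 b' c)) = 0"
    and bN: "b' \<in> {b'. \<bar>b' - c\<bar> \<le> int n \<and> (b' - c + int n) mod 2 = 0}"
  define f where "f = (\<lambda>j::nat. c - int n + 2 * int j)"
  have Nim: "N = f ` {..n}"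
  proof
    show "f ` {..n} \<subseteq> N" unfolding N_def f_def by (auto simp: abs_le_iff)
    show "N \<subseteq> f ` {..n}"
    proof
      fix y assume "y \<in> N"
      then have y: "\<bar>y - c\<bar> \<le> int n" "(y - c + int n) mod 2 = 0" unfolding N_def by auto
      define j where "j = nat ((y - c + int n) div 2)"
      have "2 * int j = y - c + int n" unfolding j_def using y by (simp add: abs_le_iff) presburger
      then have "y = f j" "j \<le> n" unfolding f_def using y by (auto simp: abs_le_iff)
      then show "y \<in> f ` {..n}" by auto
    qed
  qed
  have inj: "inj_on f {..n}" unfolding f_def by (rule inj_onI) simp
  have S: "(\<Sum>j\<le>n. smult (g (f j)) (psi \<alpha> s t n 0 (c - int n + 2 * int j) c)) = 0"
    using S0 unfolding N_def[symmetric] Nim sum.reindex[OF inj] by (simp add: f_def)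
  have Gz: "g (f j0) = 0" if "j0 \<le> n" for j0
    by (rule indep_nat[OF al w S that])
  from bN have "b' \<in> f ` {..n}" unfolding N_def[symmetric] Nim .
  then show "g b' = 0" using Gz by auto
qed


theorem mainTheorem12:
  fixes \<alpha> s t u :: complex and n m :: nat and a b c :: int
  assumes "\<alpha> \<noteq> 0"
    and "(s + t) / 2 \<notin> \<int>"
    and "0 < n" and "0 < m"
    and "\<bar>a - b\<bar> \<le> int n" and "(a - b + int n) mod 2 = 0"
    and "\<bar>b - c\<bar> \<le> int m" and "(b - c + int m) mod 2 = 0"
  shows "Lop \<alpha> s t m u b c (psi \<alpha> s t n 0 a b) =
           (\<Sum>b'\<in>{b'. \<bar>b' - a\<bar> \<le> int m \<and> (b' - a + int m) mod 2 = 0}.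
              smult (Wcoef s t n m a b b' c u) (psi \<alpha> s t n 0 b' c))
    \<and> (\<forall>g :: int \<Rightarrow> complex.
          (\<Sum>b'\<in>{b'. \<bar>b' - c\<bar> \<le> int n \<and> (b' - c + int n) mod 2 = 0}.
              smult (g b') (psi \<alpha> s t n 0 b' c)) = 0
          \<longrightarrow> (\<forall>b'\<in>{b'. \<bar>b' - c\<bar> \<le> int n \<and> (b' - c + int n) mod 2 = 0}. g b' = 0))
    \<and> (\<forall>g :: int \<Rightarrow> complex.
          Lop \<alpha> s t m u b c (psi \<alpha> s t n 0 a b) =
            (\<Sum>b'\<in>{b'. \<bar>b' - c\<bar> \<le> int n \<and> (b' - c + int n) mod 2 = 0}.
               smult (g b') (psi \<alpha> s t n 0 b' c))
          \<longrightarrow> (\<forall>b'\<in>{b'. \<bar>b' - c\<bar> \<le> int n \<and> (b' - c + int n) mod 2 = 0}.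
                 g b' = (if \<bar>b' - a\<bar> \<le> int m \<and> (b' - a + int m) mod 2 = 0
                         then Wcoef s t n m a b b' c u else 0)))"
proof -
  define M where "M = {b'. \<bar>b' - a\<bar> \<le> int m \<and> (b' - a + int m) mod 2 = 0}"
  define N where "N = {b'. \<bar>b' - c\<bar> \<le> int n \<and> (b' - c + int n) mod 2 = 0}"
  note P1 = part1[OF assms(1,2,5,6,7,8), of u]
  note P2 = indep[OF assms(1,2), of n c]
  have P3: "\<forall>g :: int \<Rightarrow> complex.
          Lop \<alpha> s t m u b c (psi \<alpha> s t n 0 a b) =
            (\<Sum>b'\<in>N. smult (g b') (psi \<alpha> s t n 0 b' c))
          \<longrightarrow> (\<forall>b'\<in>N. g b' = (if b' \<in> M then Wcoef s t n m a b b' c u else 0))"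
  proof (intro allI impI)
    fix g :: "int \<Rightarrow> complex"
    assume H: "Lop \<alpha> s t m u b c (psi \<alpha> s t n 0 a b) = (\<Sum>b'\<in>N. smult (g b') (psi \<alpha> s t n 0 b' c))"
    define W' where "W' = (\<lambda>b'. if b' \<in> M then Wcoef s t n m a b b' c u else 0)"
    have finM: "finite M" unfolding M_def
      by (rule finite_subset[of _ "{a - int m .. a + int m}"]) (auto simp: abs_le_iff)
    have finN: "finite N" unfolding N_def
      by (rule finite_subset[of _ "{c - int n .. c + int n}"]) (auto simp: abs_le_iff)
    have E1: "(\<Sum>b'\<in>M. smult (Wcoef s t n m a b b' c u) (psi \<alpha> s t n 0 b' c)) = (\<Sum>b'\<in>M \<union> N. smult (W' b') (psi \<alpha> s t n 0 b' c))"
    proof -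
      have "(\<Sum>b'\<in>M. smult (Wcoef s t n m a b b' c u) (psi \<alpha> s t n 0 b' c)) = (\<Sum>b'\<in>M. smult (W' b') (psi \<alpha> s t n 0 b' c))"
        by (rule sum.cong) (simp_all add: W'_def)
      also have "\<dots> = (\<Sum>b'\<in>M \<union> N. smult (W' b') (psi \<alpha> s t n 0 b' c))"
        by (rule sum.mono_neutral_left) (use finM finN in \<open>auto simp: W'_def\<close>)
      finally show ?thesis .
    qed
    have E2: "(\<Sum>b'\<in>N. smult (W' b') (psi \<alpha> s t n 0 b' c)) = (\<Sum>b'\<in>M \<union> N. smult (W' b') (psi \<alpha> s t n 0 b' c))"
    proof (rule sum.mono_neutral_left)
      show "finite (M \<union> N)" using finM finN by simp
      show "N \<subseteq> M \<union> N" by auto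
      show "\<forall>i\<in>M \<union> N - N. smult (W' i) (psi \<alpha> s t n 0 i c) = 0"
      proof
        fix i assume i: "i \<in> M \<union> N - N"
        then have iM: "\<bar>i - a\<bar> \<le> int m" "(i - a + int m) mod 2 = 0" and iN: "\<not> (\<bar>i - c\<bar> \<le> int n \<and> (i - c + int n) mod 2 = 0)"
          unfolding M_def N_def by auto
        have par: "(i - c + int n) mod 2 = 0" using iM(2) assms(6) assms(8) by presburger
        have nab: "\<not> \<bar>i - c\<bar> \<le> int n" using iN par by simp
        have "\<not> valid n i c" unfolding valid_def using nab by (simp add: abs_le_iff) presburger
        then show "smult (W' i) (psi \<alpha> s t n 0 i c) = 0" by (simp add: psi_invalid)
      qed
    qed
    have "(\<Sum>b'\<in>N. smult (g b' - W' b') (psi \<alpha> s t n 0 b' c)) = 0"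
    proof -
      have "(\<Sum>b'\<in>N. smult (g b' - W' b') (psi \<alpha> s t n 0 b' c))
          = (\<Sum>b'\<in>N. smult (g b') (psi \<alpha> s t n 0 b' c)) - (\<Sum>b'\<in>N. smult (W' b') (psi \<alpha> s t n 0 b' c))"
        by (simp add: smult_diff_left sum_subtractf)
      also have "\<dots> = 0" unfolding H[symmetric] P1[folded M_def] E1 E2 by simp
      finally show ?thesis .
    qed
    note D = this
    have "\<forall>b'\<in>N. g b' - W' b' = 0"
    proof
      fix b' assume bN: "b' \<in> N"
      show "g b' - W' b' = 0" using P2[rule_format, of "\<lambda>b'. g b' - W' b'" b'] D bN unfolding N_def by simp
    qed
    then show "\<forall>b'\<in>N. g b' = (if b' \<in> M then Wcoef s t n m a b b' c u else 0)" unfolding W'_def by auto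
  qed
  show ?thesis using P1 P2 P3 unfolding M_def N_def mem_Collect_eq by blast
qed


end
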